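(* Let $k\colon\mathbb{R}\setminus\{0\}\to[0,\infty)$ be increasing on $(-\infty,0)$ and decreasing on $(0,\infty)$, and such that $\frac{k(t)}{|t|}1_{\mathbb{R}\setminus\{0\}}(t)\,\mathrm{d}t$ is a Lévy measure. Let $a\ge0$. Then there exists a sequence $(k_n)$ of functions $k_n\colon\mathbb{R}\setminus\{0\}\to[0,\infty)$, each satisfying (a) $k_n$ is $C^2$ on $\mathbb{R}\setminus\{0\}$ and $(1+t^2)^m k_n^{(p)}(t)$ is bounded for all $m,p\in\{0,1,2\}$; (b) $k_n$ is increasing on $(-\infty,0)$ and decreasing on $(0,\infty)$; (c) $k_n$ is strictly positive on $\mathbb{R}\setminus\{0\}$; such that $$\frac{|t|k_n(t)}{1+t^2}\,\mathrm{d}t\ \longrightarrow\ a\delta_0+\frac{|t|k(t)}{1+t^2}\,\mathrm{d}t\quad\text{weakly as }n\to\infty.$$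
   Context: A Lévy measure on $\mathbb{R}$ is a Borel measure $\rho$ with $\rho(\{0\})=0$ and $\int_{\mathbb{R}}\min\{1,t^2\}\rho(\mathrm{d}t)<\infty$. Weak convergence of finite measures means convergence of integrals of every bounded continuous function. $\delta_0$ is the Dirac measure at $0$. *)

theory Defs
  imports "HOL-Probability.Probability"
begin

definition levy_measure :: "real measure \<Rightarrow> bool" where
  "levy_measure \<rho> \<longleftrightarrow> sets \<rho> = sets borel \<and> emeasure \<rho> {0} = 0 \<and>
     (\<integral>\<^sup>+ t. ennreal (min 1 (t\<^sup>2)) \<partial>\<rho>) < \<infinity>"

definition weak_conv_finite :: "(nat \<Rightarrow> real measure) \<Rightarrow> real measure \<Rightarrow> bool" where
  "weak_conv_finite Ms M \<longleftrightarrow>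
     (\<forall>n. finite_measure (Ms n) \<and> sets (Ms n) = sets borel) \<and>
     finite_measure M \<and> sets M = sets borel \<and>
     (\<forall>f :: real \<Rightarrow> real. continuous_on UNIV f \<and> bounded (range f) \<longrightarrow>
        (\<lambda>n. integral\<^sup>L (Ms n) f) \<longlonglongrightarrow> integral\<^sup>L M f)"

definition limit_measure :: "real \<Rightarrow> (real \<Rightarrow> real) \<Rightarrow> real measure" where
  "limit_measure a k = measure_of UNIV (sets borel)
     (\<lambda>A. ennreal a * indicator A 0 +
          (\<integral>\<^sup>+ t. ennreal (\<bar>t\<bar> * k t / (1 + t\<^sup>2)) * indicator A t \<partial>lborel))"

definition smooth_decay :: "(real \<Rightarrow> real) \<Rightarrow> bool" where
  "smooth_decay g \<longleftrightarrow>
     (\<forall>t. t \<noteq> 0 \<longrightarrow> g field_differentiable (at t) \<and> deriv g field_differentiable (at t)) \<and>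
     continuous_on (- {0}) (deriv (deriv g)) \<and>
     (\<forall>m \<in> {0..2::nat}. \<forall>p \<in> {0..2::nat}. \<exists>B. \<forall>t. t \<noteq> 0 \<longrightarrow>
        \<bar>(1 + t\<^sup>2) ^ m * (deriv ^^ p) g t\<bar> \<le> B)"

end

theory Submission
  imports Defs "HOL-Probability.Sinc_Integral"
begin


definition decr :: "(real \<Rightarrow> real) \<Rightarrow> bool" where
  "decr g \<longleftrightarrow> (\<forall>x y. x \<le> y \<longrightarrow> g y \<le> g x)"

definition avg :: "real \<Rightarrow> (real \<Rightarrow> real) \<Rightarrow> real \<Rightarrow> real" where
  "avg h g t = integral {t..t+h} g / h"

lemma decr_integrable: "decr g \<Longrightarrow> g integrable_on {a..b}"
proof -
  assume "decr g"
  then have "mono_on {a..b} (\<lambda>x. - g x)" by (auto simp: mono_on_def decr_def)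
  then have "(\<lambda>x. - g x) integrable_on {a..b}" by (rule integrable_on_mono_on)
  then show ?thesis using integrable_neg_iff by blast
qed

lemma avg_bounds:
  assumes "decr g" "h > 0"
  shows "g (t+h) \<le> avg h g t" "avg h g t \<le> g t"
proof -
  have i: "g integrable_on {t..t+h}" using assms decr_integrable by blast
  have "integral {t..t+h} g \<le> integral {t..t+h} (\<lambda>_. g t)"
    by (rule integral_le[OF i]) (use assms in \<open>auto simp: decr_def\<close>)
  also have "\<dots> = h * g t" using assms by simp
  finally show "avg h g t \<le> g t" using assms by (simp add: avg_def divide_le_eq mult.commute)
  have "integral {t..t+h} (\<lambda>_. g (t+h)) \<le> integral {t..t+h} g"
    by (rule integral_le[OF _ i]) (use assms in \<open>auto simp: decr_def\<close>)
  moreover have "integral {t..t+h} (\<lambda>_. g (t+h)) = h * g (t+h)" using assms by simp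
  ultimately show "g (t+h) \<le> avg h g t" using assms by (simp add: avg_def le_divide_eq mult.commute)
qed

lemma avg_decr:
  assumes "decr g" "h > 0"
  shows "decr (avg h g)"
  unfolding decr_def
proof (intro allI impI)
  fix x y :: real assume xy: "x \<le> y"
  show "avg h g y \<le> avg h g x"
  proof (cases "x + h \<le> y")
    case True
    have "avg h g y \<le> g y" by (rule avg_bounds(2)[OF assms])
    also have "\<dots> \<le> g (x+h)" using True assms(1) by (auto simp: decr_def)
    also have "\<dots> \<le> avg h g x" by (rule avg_bounds(1)[OF assms])
    finally show ?thesis .
  next
    case False
    have i1: "g integrable_on {x..x+h}" "g integrable_on {y..y+h}"
      "g integrable_on {x..y}" "g integrable_on {x+h..y+h}"
      using assms decr_integrable by blast+
    have e1: "integral {x..y} g + integral {y..x+h} g = integral {x..x+h} g"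
      by (rule Henstock_Kurzweil_Integration.integral_combine[where a=x and c=y and b="x+h" and f=g]) (use xy False i1 in auto)
    have e2: "integral {y..x+h} g + integral {x+h..y+h} g = integral {y..y+h} g"
      by (rule Henstock_Kurzweil_Integration.integral_combine[where a=y and c="x+h" and b="y+h" and f=g]) (use xy False i1 in auto)
    have "integral {x..y} (\<lambda>_. g y) \<le> integral {x..y} g"
      by (rule integral_le[OF _ i1(3)]) (use assms in \<open>auto simp: decr_def\<close>)
    moreover have "integral {x+h..y+h} g \<le> integral {x+h..y+h} (\<lambda>_. g (x+h))"
      by (rule integral_le[OF i1(4)]) (use assms in \<open>auto simp: decr_def\<close>)
    moreover have "integral {x..y} (\<lambda>_. g y) = (y - x) * g y" using xy by simp
    moreover have "integral {x+h..y+h} (\<lambda>_. g (x+h)) = (y - x) * g (x+h)" using xy by simp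
    moreover have "(y - x) * g (x+h) \<le> (y - x) * g y"
      using xy False assms(1) by (intro mult_left_mono) (auto simp: decr_def)
    ultimately have "integral {y..y+h} g \<le> integral {x..x+h} g" using e1 e2 by linarith
    then show ?thesis using assms by (simp add: avg_def divide_right_mono)
  qed
qed

lemma avg_split:
  fixes g :: "real \<Rightarrow> real"
  assumes "g integrable_on {a..b}" "a \<le> u" "h \<ge> 0" "u + h \<le> b"
  shows "integral {u..u+h} g = integral {a..u+h} g - integral {a..u} g"
proof -
  have "g integrable_on {a..u+h}"
    by (rule integrable_on_subinterval[OF assms(1)]) (use assms in auto)
  then have "integral {a..u} g + integral {u..u+h} g = integral {a..u+h} g"
    by (rule Henstock_Kurzweil_Integration.integral_combine[where a=a and c=u and b="u+h" and f=g, rotated 2]) (use assms in auto)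
  then show ?thesis by simp
qed

lemma avg_cont:
  assumes "decr g" "h > 0"
  shows "continuous_on UNIV (avg h g)"
proof (rule continuous_at_imp_continuous_on, intro ballI)
  fix t :: real
  define a where "a = t - 1"
  define b where "b = t + h + 1"
  have i: "g integrable_on {a..b}" using assms decr_integrable by blast
  have c: "continuous_on {a..b} (\<lambda>x. integral {a..x} g)"
    by (rule indefinite_integral_continuous_1[OF i])
  have "continuous_on {a..b-h} (\<lambda>u. (integral {a..u+h} g - integral {a..u} g) / h)"
    apply (intro continuous_intros continuous_on_compose2[OF c] continuous_on_subset[OF c])
    using assms by auto
  then have "continuous_on {a..b-h} (avg h g)"
    by (rule continuous_on_eq) (use assms avg_split[OF i] in \<open>auto simp: avg_def\<close>)
  then show "isCont (avg h g) t"
    by (rule continuous_on_interior) (auto simp: a_def b_def)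
qed

lemma avg_deriv:
  assumes "continuous_on UNIV g" "h > 0"
  shows "(avg h g has_real_derivative (g (t+h) - g t) / h) (at t)"
proof -
  define a where "a = t - 1"
  define b where "b = t + h + 1"
  have i: "g integrable_on {a..b}"
    using assms integrable_continuous_real continuous_on_subset by blast
  have D: "((\<lambda>x. integral {a..x} g) has_real_derivative g u) (at u)" if "u \<in> {a<..<b}" for u
  proof -
    have "((\<lambda>x. integral {a..x} g) has_real_derivative g u) (at u within {a..b})"
      by (rule integral_has_real_derivative) (use assms that continuous_on_subset in auto)
    then have "((\<lambda>x. integral {a..x} g) has_real_derivative g u) (at u within {a<..<b})"
      by (rule has_field_derivative_subset) auto
    then show ?thesis using that at_within_open[of u "{a<..<b}"] by simp
  qed
  have "((\<lambda>u. (integral {a..u+h} g - integral {a..u} g) / h) has_real_derivative (g (t+h) - g t) / h) (at t)"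
  proof -
    have d1: "((\<lambda>u. integral {a..u+h} g) has_real_derivative g (t+h)) (at t)"
    proof -
      have "((\<lambda>u. u + h) has_real_derivative 1) (at t)" by (auto intro!: derivative_eq_intros)
      moreover have "t + h \<in> {a<..<b}" using assms by (auto simp: a_def b_def)
      ultimately show ?thesis using DERIV_chain2[where f="\<lambda>x. integral {a..x} g" and g="\<lambda>u. u + h" and x=t and s=UNIV and Db=1, OF D] by auto
    qed
    have d2: "((\<lambda>u. integral {a..u} g) has_real_derivative g t) (at t)"
      using D[of t] assms by (simp add: a_def b_def)
    have e: "((g (t + h) - g t) * h - (integral {a..t + h} g - integral {a..t} g) * 0) / (h * h) = (g (t+h) - g t) / h"
      using assms by (simp add: field_simps)
    show ?thesis using DERIV_divide[OF DERIV_diff[OF d1 d2] DERIV_const[where k=h and F="at t"]] assms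
      by (simp only: e)
  qed
  then show ?thesis
    apply (rule has_field_derivative_transform_within_open[where S="{a<..<b-h}"])
    using assms avg_split[OF i] by (auto simp: avg_def a_def b_def)
qed


lemma avg_zero:
  assumes "\<And>u. u \<ge> L \<Longrightarrow> g u = 0" "s \<ge> L" "h > 0"
  shows "avg h g s = 0"
proof -
  have "integral {s..s+h} g = integral {s..s+h} (\<lambda>_. 0::real)"
    by (rule integral_cong) (use assms in auto)
  then show ?thesis by (simp add: avg_def)
qed

definition R :: "real \<Rightarrow> (real \<Rightarrow> real) \<Rightarrow> real \<Rightarrow> real" where
  "R h g = avg h (avg h (avg h g))"

definition C2B :: "(real \<Rightarrow> real) \<Rightarrow> bool" where
  "C2B F \<longleftrightarrow> (\<exists>F1 F2 B. (\<forall>t. (F has_real_derivative F1 t) (at t)) \<and>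
     (\<forall>t. (F1 has_real_derivative F2 t) (at t)) \<and> continuous_on UNIV F2 \<and>
     (\<forall>t>0. (1+t\<^sup>2)^2 * \<bar>F t\<bar> \<le> B \<and> (1+t\<^sup>2)^2 * \<bar>F1 t\<bar> \<le> B \<and> (1+t\<^sup>2)^2 * \<bar>F2 t\<bar> \<le> B))"

lemma R_basic:
  assumes g: "decr g" "h > 0" "\<And>s. 0 \<le> g s" "\<And>s. g s \<le> B" "\<And>s. s \<ge> L \<Longrightarrow> g s = 0"
  shows "decr (R h g)" "\<And>t. 0 \<le> R h g t" "\<And>t. R h g t \<le> B"
    "\<And>t. t \<ge> L \<Longrightarrow> R h g t = 0" "\<And>t. g (t + 3*h) \<le> R h g t" "\<And>t. R h g t \<le> g t"
    "continuous_on UNIV (R h g)"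
proof -
  define A1 where "A1 = avg h g"
  define A2 where "A2 = avg h A1"
  have d1: "decr A1" unfolding A1_def by (rule avg_decr[OF g(1,2)])
  have d2: "decr A2" unfolding A2_def by (rule avg_decr[OF d1 g(2)])
  have b1: "g (t+h) \<le> A1 t" "A1 t \<le> g t" for t unfolding A1_def using avg_bounds[OF g(1,2)] by auto
  have b2: "A1 (t+h) \<le> A2 t" "A2 t \<le> A1 t" for t unfolding A2_def using avg_bounds[OF d1 g(2)] by auto
  have b3: "A2 (t+h) \<le> R h g t" "R h g t \<le> A2 t" for t unfolding R_def A2_def[symmetric] A1_def[symmetric]
    using avg_bounds[OF d2 g(2)] by auto
  show "decr (R h g)" unfolding R_def A1_def[symmetric] A2_def[symmetric] by (rule avg_decr[OF d2 g(2)])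
  show "0 \<le> R h g t" for t using b1 b2 b3 g(3)[of "t+h+h+h"] by (meson order_trans)
  show "R h g t \<le> B" for t using b1 b2 b3 g(4)[of t] by (meson order_trans)
  show "g (t + 3*h) \<le> R h g t" for t using b1[of "t+h+h"] b2[of "t+h"] b3[of t]
    by (simp add: algebra_simps)
  show "R h g t \<le> g t" for t using b1 b2 b3 by (meson order_trans)
  have z1: "A1 t = 0" if "t \<ge> L" for t unfolding A1_def by (rule avg_zero[OF g(5) that g(2)])
  have z2: "A2 t = 0" if "t \<ge> L" for t unfolding A2_def by (rule avg_zero[OF z1 that g(2)])
  show "R h g t = 0" if "t \<ge> L" for t unfolding R_def A1_def[symmetric] A2_def[symmetric]
    by (rule avg_zero[OF z2 that g(2)])
  show "continuous_on UNIV (R h g)" unfolding R_def A1_def[symmetric] A2_def[symmetric]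
    by (rule avg_cont[OF d2 g(2)])
qed

lemma R_C2B:
  assumes g: "decr g" "h > 0" "\<And>s. 0 \<le> g s" "\<And>s. g s \<le> B" "\<And>s. s \<ge> L \<Longrightarrow> g s = 0"
  shows "C2B (R h g)"
proof -
  define A1 where "A1 = avg h g"
  define A2 where "A2 = avg h A1"
  have d1: "decr A1" unfolding A1_def by (rule avg_decr[OF g(1,2)])
  have d2: "decr A2" unfolding A2_def by (rule avg_decr[OF d1 g(2)])
  have b1: "g (t+h) \<le> A1 t" "A1 t \<le> g t" for t unfolding A1_def using avg_bounds[OF g(1,2)] by auto
  have b2: "A1 (t+h) \<le> A2 t" "A2 t \<le> A1 t" for t unfolding A2_def using avg_bounds[OF d1 g(2)] by auto
  have r1: "0 \<le> A1 t" "A1 t \<le> B" for t using b1 g(3,4) by (meson order_trans)+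
  have r2: "0 \<le> A2 t" "A2 t \<le> B" for t using b2 r1 by (meson order_trans)+
  have z1: "A1 t = 0" if "t \<ge> L" for t unfolding A1_def by (rule avg_zero[OF g(5) that g(2)])
  have z2: "A2 t = 0" if "t \<ge> L" for t unfolding A2_def by (rule avg_zero[OF z1 that g(2)])
  have c1: "continuous_on UNIV A1" unfolding A1_def by (rule avg_cont[OF g(1,2)])
  define D2 where "D2 t = (A1 (t+h) - A1 t) / h" for t
  define D3 where "D3 t = (A2 (t+h) - A2 t) / h" for t
  define E3 where "E3 t = (D2 (t+h) - D2 t) / h" for t
  have dA2: "(A2 has_real_derivative D2 t) (at t)" for t
    unfolding A2_def D2_def by (rule avg_deriv[OF c1 g(2)])
  have c2: "continuous_on UNIV A2"
    using dA2 by (meson DERIV_isCont continuous_at_imp_continuous_on)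
  have cD2: "continuous_on UNIV D2" unfolding D2_def
    using g(2) by (intro continuous_intros continuous_on_compose2[OF c1]) auto
  have dA3: "(R h g has_real_derivative D3 t) (at t)" for t
    unfolding R_def A1_def[symmetric] A2_def[symmetric] D3_def by (rule avg_deriv[OF c2 g(2)])
  have dD3: "(D3 has_real_derivative E3 t) (at t)" for t
  proof -
    have dd: "((\<lambda>u. u + h) has_real_derivative 1) (at t)" by (auto intro!: derivative_eq_intros)
    have "((\<lambda>u. A2 (u + h)) has_real_derivative D2 (t+h)) (at t)"
      using DERIV_chain2[where f=A2 and g="\<lambda>u. u + h" and x=t and s=UNIV and Db=1, OF dA2 dd]
      by simp
    then show ?thesis unfolding D3_def E3_def using g(2)
      by (auto intro!: derivative_eq_intros dA2)
  qed
  have cE3: "continuous_on UNIV E3" unfolding E3_def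
    using g(2) by (intro continuous_intros continuous_on_compose2[OF cD2]) auto
  define C where "C = B + B / h + 2 * B / h^2"
  have B0: "0 \<le> B" using g(3,4) order_trans by blast
  have bD2: "\<bar>D2 t\<bar> \<le> B / h" for t
  proof -
    have "\<bar>A1 (t+h) - A1 t\<bar> \<le> B" using r1[of t] r1[of "t+h"] by auto
    then show ?thesis using g(2) by (simp add: D2_def abs_divide divide_right_mono)
  qed
  have bD3: "\<bar>D3 t\<bar> \<le> B / h" for t
  proof -
    have "\<bar>A2 (t+h) - A2 t\<bar> \<le> B" using r2[of t] r2[of "t+h"] by auto
    then show ?thesis using g(2) by (simp add: D3_def abs_divide divide_right_mono)
  qed
  have bE3: "\<bar>E3 t\<bar> \<le> 2 * B / h^2" for t
  proof -
    have "\<bar>D2 (t+h) - D2 t\<bar> \<le> 2 * B / h" using bD2[of t] bD2[of "t+h"] by auto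
    then have "\<bar>D2 (t+h) - D2 t\<bar> / h \<le> (2 * B / h) / h" using g(2) by (intro divide_right_mono) auto
    then show ?thesis using g(2) by (simp add: E3_def abs_divide power2_eq_square)
  qed
  have rR: "0 \<le> R h g t" "R h g t \<le> B" for t using R_basic[OF g] by auto
  have zR: "R h g t = 0" if "t \<ge> L" for t using R_basic[OF g] that by auto
  have zD3: "D3 t = 0" if "t \<ge> L" for t using z2 that g(2) by (simp add: D3_def)
  have zD2: "D2 t = 0" if "t \<ge> L" for t using z1 that g(2) by (simp add: D2_def)
  have zE3: "E3 t = 0" if "t \<ge> L" for t using zD2 that g(2) by (simp add: E3_def)
  have allC: "\<bar>R h g t\<bar> \<le> C \<and> \<bar>D3 t\<bar> \<le> C \<and> \<bar>E3 t\<bar> \<le> C" for t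
    using rR[of t] bD3[of t] bE3[of t] B0 g(2) by (auto simp: C_def)
  have C0: "0 \<le> C" using allC[of 0] by auto
  have bnd: "(1+t\<^sup>2)^2 * \<bar>X\<bar> \<le> (1+L\<^sup>2)^2 * C" if "t > 0" "t < L" "\<bar>X\<bar> \<le> C" for t X :: real
  proof -
    have "t\<^sup>2 \<le> L\<^sup>2" using that by (intro power_mono) auto
    then have "(1+t\<^sup>2)^2 \<le> (1+L\<^sup>2)^2" by (intro power_mono) auto
    then show ?thesis using that by (intro mult_mono) auto
  qed
  have "\<forall>t>0. (1+t\<^sup>2)^2 * \<bar>R h g t\<bar> \<le> (1+L\<^sup>2)^2 * C \<and> (1+t\<^sup>2)^2 * \<bar>D3 t\<bar> \<le> (1+L\<^sup>2)^2 * C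
      \<and> (1+t\<^sup>2)^2 * \<bar>E3 t\<bar> \<le> (1+L\<^sup>2)^2 * C"
  proof (intro allI impI)
    fix t :: real assume t: "t > 0"
    show "(1+t\<^sup>2)^2 * \<bar>R h g t\<bar> \<le> (1+L\<^sup>2)^2 * C \<and> (1+t\<^sup>2)^2 * \<bar>D3 t\<bar> \<le> (1+L\<^sup>2)^2 * C
      \<and> (1+t\<^sup>2)^2 * \<bar>E3 t\<bar> \<le> (1+L\<^sup>2)^2 * C"
    proof (cases "t < L")
      case True then show ?thesis using bnd[OF t True] allC[of t] by blast
    next
      case False then show ?thesis using zR[of t] zD3[of t] zE3[of t] C0 by auto
    qed
  qed
  then show ?thesis unfolding C2B_def using dA3 dD3 cE3 by blast
qed

lemma C2B_add: "C2B F \<Longrightarrow> C2B G \<Longrightarrow> C2B (\<lambda>t. F t + G t)"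
proof -
  assume "C2B F" "C2B G"
  then obtain F1 F2 B G1 G2 B' where
    F: "\<forall>t. (F has_real_derivative F1 t) (at t)" "\<forall>t. (F1 has_real_derivative F2 t) (at t)" "continuous_on UNIV F2"
      "\<forall>t>0. (1+t\<^sup>2)^2 * \<bar>F t\<bar> \<le> B \<and> (1+t\<^sup>2)^2 * \<bar>F1 t\<bar> \<le> B \<and> (1+t\<^sup>2)^2 * \<bar>F2 t\<bar> \<le> B" and
    G: "\<forall>t. (G has_real_derivative G1 t) (at t)" "\<forall>t. (G1 has_real_derivative G2 t) (at t)" "continuous_on UNIV G2"
      "\<forall>t>0. (1+t\<^sup>2)^2 * \<bar>G t\<bar> \<le> B' \<and> (1+t\<^sup>2)^2 * \<bar>G1 t\<bar> \<le> B' \<and> (1+t\<^sup>2)^2 * \<bar>G2 t\<bar> \<le> B'"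
    unfolding C2B_def by blast
  have bnd: "(1+t\<^sup>2)^2 * \<bar>x + y\<bar> \<le> B + B'" if "(1+t\<^sup>2)^2 * \<bar>x\<bar> \<le> B" "(1+t\<^sup>2)^2 * \<bar>y\<bar> \<le> B'" for t x y :: real
  proof -
    have "(1+t\<^sup>2)^2 * \<bar>x + y\<bar> \<le> (1+t\<^sup>2)^2 * (\<bar>x\<bar> + \<bar>y\<bar>)" by (intro mult_left_mono) auto
    then show ?thesis using that by (simp add: distrib_left)
  qed
  show ?thesis unfolding C2B_def
    apply (rule exI[of _ "\<lambda>t. F1 t + G1 t"], rule exI[of _ "\<lambda>t. F2 t + G2 t"], rule exI[of _ "B + B'"])
    using F G bnd by (auto intro!: derivative_eq_intros continuous_intros)
qed

lemma C2B_cmult: "C2B F \<Longrightarrow> C2B (\<lambda>t. c * F t)"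
proof -
  assume "C2B F"
  then obtain F1 F2 B where
    F: "\<forall>t. (F has_real_derivative F1 t) (at t)" "\<forall>t. (F1 has_real_derivative F2 t) (at t)" "continuous_on UNIV F2"
      "\<forall>t>0. (1+t\<^sup>2)^2 * \<bar>F t\<bar> \<le> B \<and> (1+t\<^sup>2)^2 * \<bar>F1 t\<bar> \<le> B \<and> (1+t\<^sup>2)^2 * \<bar>F2 t\<bar> \<le> B"
    unfolding C2B_def by blast
  have bnd: "(1+t\<^sup>2)^2 * \<bar>c * x\<bar> \<le> \<bar>c\<bar> * B" if "(1+t\<^sup>2)^2 * \<bar>x\<bar> \<le> B" for t x :: real
  proof -
    have "(1+t\<^sup>2)^2 * \<bar>c * x\<bar> = \<bar>c\<bar> * ((1+t\<^sup>2)^2 * \<bar>x\<bar>)" by (simp add: abs_mult)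
    also have "\<dots> \<le> \<bar>c\<bar> * B" using that by (intro mult_left_mono) auto
    finally show ?thesis .
  qed
  show ?thesis unfolding C2B_def
    apply (rule exI[of _ "\<lambda>t. c * F1 t"], rule exI[of _ "\<lambda>t. c * F2 t"], rule exI[of _ "\<bar>c\<bar> * B"])
    using F bnd by (auto intro!: derivative_eq_intros continuous_intros)
qed


lemma gam_C2B: "C2B (\<lambda>t. 1 / (1 + t\<^sup>2)^3)"
proof -
  define F1 where "F1 t = -6 * t / (1 + t\<^sup>2)^4" for t :: real
  define F2 where "F2 t = -6 / (1 + t\<^sup>2)^4 + 48 * t\<^sup>2 / (1 + t\<^sup>2)^5" for t :: real
  have pos: "0 < 1 + t\<^sup>2" for t :: real by (simp add: add_pos_nonneg)
  have d1: "((\<lambda>t. 1 / (1 + t\<^sup>2)^3) has_real_derivative F1 t) (at t)" for t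
    unfolding F1_def using pos[of t]
    apply (auto intro!: derivative_eq_intros simp: field_simps power2_eq_square)
    by (simp add: power_eq_if algebra_simps)
  have d2: "(F1 has_real_derivative F2 t) (at t)" for t
    unfolding F1_def[abs_def] F2_def using pos[of t]
    by (auto intro!: derivative_eq_intros simp: field_simps power2_eq_square)
  have c2: "continuous_on UNIV F2" unfolding F2_def[abs_def]
    using pos by (intro continuous_intros) (metis less_irrefl power_not_zero)+
  have b0: "(1+t\<^sup>2)^2 * \<bar>1 / (1 + t\<^sup>2)^3\<bar> \<le> 54" for t :: real
  proof -
    have gen: "(u::real) > 0 \<Longrightarrow> u^2 * \<bar>1 / u^3\<bar> = 1 / u" for u
      by (simp add: abs_of_pos field_simps power_eq_if)
    have "(1+t\<^sup>2)^2 * \<bar>1 / (1 + t\<^sup>2)^3\<bar> = 1 / (1 + t\<^sup>2)" using gen[OF pos[of t]] .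
    also have "\<dots> \<le> 1" using pos[of t] by (simp add: divide_le_eq)
    finally show ?thesis by simp
  qed
  have at: "\<bar>t\<bar> \<le> 1 + t\<^sup>2" for t :: real
  proof -
    have "0 \<le> (\<bar>t\<bar> - 1)\<^sup>2" by simp
    then have "2 * \<bar>t\<bar> \<le> \<bar>t\<bar>\<^sup>2 + 1" by (simp add: power2_diff)
    then show ?thesis by simp
  qed
  have b1: "(1+t\<^sup>2)^2 * \<bar>F1 t\<bar> \<le> 54" for t :: real
  proof -
    have gen: "(u::real) > 0 \<Longrightarrow> u^2 * \<bar>-6 * t / u^4\<bar> = 6 * \<bar>t\<bar> / u^2" for u
      by (simp add: abs_of_pos field_simps power_eq_if abs_mult)
    have "(1+t\<^sup>2)^2 * \<bar>F1 t\<bar> = 6 * \<bar>t\<bar> / (1 + t\<^sup>2)^2" using gen[OF pos[of t]]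
      by (simp add: F1_def)
    also have "\<dots> \<le> 6 * (1 + t\<^sup>2) / (1 + t\<^sup>2)^2"
      using at[of t] pos[of t] by (intro divide_right_mono) auto
    also have "\<dots> = 6 / (1 + t\<^sup>2)"
    proof -
      have gen: "(u::real) > 0 \<Longrightarrow> 6 * u / u^2 = 6 / u" for u by (simp add: power2_eq_square)
      show ?thesis using gen[OF pos[of t]] .
    qed
    also have "\<dots> \<le> 6" using pos[of t] by (simp add: divide_le_eq)
    finally show ?thesis by simp
  qed
  have b2: "(1+t\<^sup>2)^2 * \<bar>F2 t\<bar> \<le> 54" for t :: real
  proof -
    have "\<bar>F2 t\<bar> \<le> 6 / (1 + t\<^sup>2)^4 + 48 * t\<^sup>2 / (1 + t\<^sup>2)^5"
      unfolding F2_def using pos[of t] by (auto simp: abs_le_iff)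
    then have "(1+t\<^sup>2)^2 * \<bar>F2 t\<bar> \<le> (1+t\<^sup>2)^2 * (6 / (1 + t\<^sup>2)^4 + 48 * t\<^sup>2 / (1 + t\<^sup>2)^5)"
      by (intro mult_left_mono) auto
    also have "\<dots> = 6 / (1 + t\<^sup>2)^2 + 48 * (t\<^sup>2 / (1 + t\<^sup>2)) / (1 + t\<^sup>2)^2"
    proof -
      have gen: "(u::real) > 0 \<Longrightarrow> u^2 * (6 / u^4 + 48 * s / u^5) = 6 / u^2 + 48 * (s / u) / u^2" for u s
        by (simp add: field_simps power_eq_if)
      show ?thesis using gen[OF pos[of t]] by simp
    qed
    also have "\<dots> \<le> 6 + 48"
    proof -
      have q: "1 \<le> (1 + t\<^sup>2)^2" using pos[of t] by (simp add: one_le_power)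
      have s6: "6 / (1 + t\<^sup>2)^2 \<le> 6" using q by (simp add: divide_le_eq)
      have "t\<^sup>2 / (1 + t\<^sup>2) \<le> 1" using pos[of t] by (simp add: divide_le_eq)
      moreover have "0 \<le> t\<^sup>2 / (1 + t\<^sup>2)" using pos[of t] by simp
      ultimately have "48 * (t\<^sup>2 / (1 + t\<^sup>2)) \<le> 48 * (1 + t\<^sup>2)^2" using q by linarith
      moreover have gen: "(qq::real) \<ge> 1 \<Longrightarrow> y \<le> 48 * qq \<Longrightarrow> y / qq \<le> 48" for qq y
        by (simp add: divide_le_eq)
      ultimately have "48 * (t\<^sup>2 / (1 + t\<^sup>2)) / (1 + t\<^sup>2)^2 \<le> 48"
        using q by blast
      then show ?thesis using s6 by linarith
    qed
    finally show ?thesis by simp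
  qed
  show ?thesis unfolding C2B_def
    apply (rule exI[of _ F1], rule exI[of _ F2], rule exI[of _ 54])
    using d1 d2 c2 b0 b1 b2 by blast
qed


lemma pow_le_sq: "m \<in> {0..2::nat} \<Longrightarrow> (1 + t\<^sup>2)^m \<le> (1 + (t::real)\<^sup>2)^2"
  by (intro power_increasing) auto

lemma piecewise_smooth:
  assumes "C2B Fp" "C2B Fm"
  shows "smooth_decay (\<lambda>t. if 0 < t then Fp t else Fm (-t))"
proof -
  obtain F1p F2p Bp where
    P: "\<forall>t. (Fp has_real_derivative F1p t) (at t)" "\<forall>t. (F1p has_real_derivative F2p t) (at t)" "continuous_on UNIV F2p"
      "\<forall>t>0. (1+t\<^sup>2)^2 * \<bar>Fp t\<bar> \<le> Bp \<and> (1+t\<^sup>2)^2 * \<bar>F1p t\<bar> \<le> Bp \<and> (1+t\<^sup>2)^2 * \<bar>F2p t\<bar> \<le> Bp"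
    using assms(1) unfolding C2B_def by blast
  obtain F1m F2m Bm where
    M: "\<forall>t. (Fm has_real_derivative F1m t) (at t)" "\<forall>t. (F1m has_real_derivative F2m t) (at t)" "continuous_on UNIV F2m"
      "\<forall>t>0. (1+t\<^sup>2)^2 * \<bar>Fm t\<bar> \<le> Bm \<and> (1+t\<^sup>2)^2 * \<bar>F1m t\<bar> \<le> Bm \<and> (1+t\<^sup>2)^2 * \<bar>F2m t\<bar> \<le> Bm"
    using assms(2) unfolding C2B_def by blast
  define G where "G = (\<lambda>t::real. if 0 < t then Fp t else Fm (-t))"
  define D1 where "D1 = (\<lambda>t::real. if 0 < t then F1p t else - F1m (-t))"
  define D2 where "D2 = (\<lambda>t::real. if 0 < t then F2p t else F2m (-t))"
  have dG: "(G has_real_derivative D1 t) (at t)" if "t \<noteq> 0" for t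
  proof (cases "t > 0")
    case True
    have X: "(Fp has_real_derivative D1 t) (at t)" using True P(1) by (simp add: D1_def)
    show ?thesis
      by (rule has_field_derivative_transform_within_open[OF X, where S="{0<..}"])
        (use True in \<open>auto simp: G_def D1_def\<close>)
  next
    case False
    then have t: "t < 0" using that by auto
    have "((\<lambda>x. Fm (-x)) has_real_derivative D1 t) (at t)"
      using DERIV_mirror[where f=Fm and x=t and y="F1m (-t)"] M(1) t by (auto simp: D1_def)
    then show ?thesis
      by (rule has_field_derivative_transform_within_open[where S="{..<0}"])
        (use t in \<open>auto simp: G_def D1_def\<close>)
  qed
  have dD1: "(D1 has_real_derivative D2 t) (at t)" if "t \<noteq> 0" for t
  proof (cases "t > 0")
    case True
    have X: "(F1p has_real_derivative D2 t) (at t)" using True P(2) by (simp add: D2_def)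
    show ?thesis
      by (rule has_field_derivative_transform_within_open[OF X, where S="{0<..}"])
        (use True in \<open>auto simp: D1_def D2_def\<close>)
  next
    case False
    then have t: "t < 0" using that by auto
    have "((\<lambda>x. F1m (-x)) has_real_derivative - F2m (-t)) (at t)"
      using DERIV_mirror[where f=F1m and x=t and y="F2m (-t)"] M(2) by auto
    then have "((\<lambda>x. - F1m (-x)) has_real_derivative D2 t) (at t)"
      using DERIV_minus t by (fastforce simp: D2_def)
    then show ?thesis
      by (rule has_field_derivative_transform_within_open[where S="{..<0}"])
        (use t in \<open>auto simp: D1_def D2_def\<close>)
  qed
  have eD1: "deriv G t = D1 t" if "t \<noteq> 0" for t using dG[OF that] by (rule DERIV_imp_deriv)
  have ddG: "(deriv G has_real_derivative D2 t) (at t)" if "t \<noteq> 0" for t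
    by (rule has_field_derivative_transform_within_open[OF dD1[OF that], where S="-{0}"])
      (use that eD1 in auto)
  have eD2: "deriv (deriv G) t = D2 t" if "t \<noteq> 0" for t using ddG[OF that] by (rule DERIV_imp_deriv)
  have cD2: "continuous_on (-{0}) D2"
  proof -
    have "continuous_on {0<..} D2"
      by (rule continuous_on_eq[OF continuous_on_subset[OF P(3)]]) (auto simp: D2_def)
    moreover have "continuous_on {..<0} D2"
    proof -
      have "continuous_on {..<0} (\<lambda>t. F2m (-t))"
        by (intro continuous_on_compose2[OF M(3)] continuous_intros) auto
      then show ?thesis by (rule continuous_on_eq) (auto simp: D2_def)
    qed
    ultimately have "continuous_on ({0<..} \<union> {..<0}) D2" by (intro continuous_on_open_Un) auto
    moreover have "{0<..} \<union> {..<0} = (-{0::real})" by auto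
    ultimately show ?thesis by simp
  qed
  define B where "B = max Bp Bm"
  have bnd: "(1+t\<^sup>2)^2 * \<bar>G t\<bar> \<le> B \<and> (1+t\<^sup>2)^2 * \<bar>D1 t\<bar> \<le> B \<and> (1+t\<^sup>2)^2 * \<bar>D2 t\<bar> \<le> B"
    if "t \<noteq> 0" for t
  proof (cases "t > 0")
    case True then show ?thesis using P(4) by (auto simp: G_def D1_def D2_def B_def max.coboundedI1)
  next
    case False
    then have "-t > 0" using that by auto
    then show ?thesis using M(4)[rule_format, of "-t"] False by (auto simp: G_def D1_def D2_def B_def max.coboundedI2)
  qed
  have bound: "\<bar>(1 + t\<^sup>2) ^ m * (deriv ^^ p) G t\<bar> \<le> B"
    if "m \<in> {0..2::nat}" "p \<in> {0..2::nat}" "t \<noteq> 0" for m p t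
  proof -
    have "\<bar>(deriv ^^ p) G t\<bar> \<in> {\<bar>G t\<bar>, \<bar>D1 t\<bar>, \<bar>D2 t\<bar>}"
    proof -
      have "p = 0 \<or> p = 1 \<or> p = 2" using that(2) by auto
      then show ?thesis using eD1[OF that(3)] eD2[OF that(3)] by (auto simp: numeral_2_eq_2)
    qed
    then have "(1+t\<^sup>2)^2 * \<bar>(deriv ^^ p) G t\<bar> \<le> B" using bnd[OF that(3)] by auto
    moreover have "\<bar>(1 + t\<^sup>2) ^ m * (deriv ^^ p) G t\<bar> \<le> (1+t\<^sup>2)^2 * \<bar>(deriv ^^ p) G t\<bar>"
      using pow_le_sq[OF that(1), of t] by (simp add: abs_mult mult_right_mono)
    ultimately show ?thesis by linarith
  qed
  have "smooth_decay G"
    unfolding smooth_decay_def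
  proof (intro conjI allI impI ballI)
    fix t :: real assume t: "t \<noteq> 0"
    show "G field_differentiable at t" using dG[OF t] field_differentiable_def by blast
    show "deriv G field_differentiable at t" using ddG[OF t] field_differentiable_def by blast
  next
    show "continuous_on (- {0}) (deriv (deriv G))"
      by (rule continuous_on_eq[OF cD2]) (use eD2 in auto)
  next
    fix m p assume "m \<in> {0..2::nat}" "p \<in> {0..2::nat}"
    then show "\<exists>B. \<forall>t. t \<noteq> 0 \<longrightarrow> \<bar>(1 + t\<^sup>2) ^ m * (deriv ^^ p) G t\<bar> \<le> B"
      using bound by blast
  qed
  then show ?thesis by (simp add: G_def)
qed



lemma lm_facts:
  fixes psi :: "real \<Rightarrow> real" and a :: real
  assumes psi_m[measurable]: "psi \<in> borel_measurable borel" and psi_nn: "\<And>t. 0 \<le> psi t"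
    and psi_int: "integrable lborel psi" and a: "0 \<le> a"
  defines "M \<equiv> measure_of UNIV (sets borel) (\<lambda>A. ennreal a * indicator A 0 + (\<integral>\<^sup>+t. ennreal (psi t) * indicator A t \<partial>lborel))"
  shows "sets M = sets borel" "finite_measure M"
    "\<And>f B. f \<in> borel_measurable borel \<Longrightarrow> (\<And>t. \<bar>f t\<bar> \<le> B) \<Longrightarrow>
        integral\<^sup>L M f = a * f 0 + integral\<^sup>L lborel (\<lambda>t. psi t * f t)"
proof -
  define R0 where "R0 = return borel (0::real)"
  define D where "D = density lborel (\<lambda>t. ennreal (psi t))"
  have sR0[simp]: "sets R0 = sets borel" "space R0 = UNIV" by (simp_all add: R0_def)
  have sD[simp]: "sets D = sets borel" "space D = UNIV" by (simp_all add: D_def)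
  have mu: "ennreal a * indicator A 0 + (\<integral>\<^sup>+t. ennreal (psi t) * indicator A t \<partial>lborel)
      = ennreal a * emeasure R0 A + emeasure D A" if "A \<in> sets borel" for A
    using that by (simp add: R0_def D_def emeasure_density)
  have sa: "sigma_algebra UNIV (sets borel)"
    using sets.sigma_algebra_axioms[of borel] by simp
  have pos: "positive (sets borel) (\<lambda>A. ennreal a * indicator A 0 + (\<integral>\<^sup>+t. ennreal (psi t) * indicator A t \<partial>lborel))"
    by (simp add: positive_def)
  have ca: "countably_additive (sets borel) (\<lambda>A. ennreal a * indicator A 0 + (\<integral>\<^sup>+t. ennreal (psi t) * indicator A t \<partial>lborel))"
    unfolding countably_additive_def
  proof (intro allI impI)
    fix A :: "nat \<Rightarrow> real set"
    assume A: "range A \<subseteq> sets borel" "disjoint_family A" "\<Union> (range A) \<in> sets borel"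
    have "(\<Sum>i. ennreal a * indicator (A i) 0 + (\<integral>\<^sup>+t. ennreal (psi t) * indicator (A i) t \<partial>lborel))
        = (\<Sum>i. ennreal a * emeasure R0 (A i) + emeasure D (A i))"
      using A(1) by (intro suminf_cong mu) auto
    also have "\<dots> = (\<Sum>i. ennreal a * emeasure R0 (A i)) + (\<Sum>i. emeasure D (A i))"
      by (rule suminf_add[symmetric]) auto
    also have "\<dots> = ennreal a * emeasure R0 (\<Union>i. A i) + emeasure D (\<Union>i. A i)"
      using A by (simp add: suminf_emeasure)
    also have "\<dots> = ennreal a * indicator (\<Union>i. A i) 0 + (\<integral>\<^sup>+t. ennreal (psi t) * indicator (\<Union>i. A i) t \<partial>lborel)"
      using A(3) by (intro mu[symmetric]) auto
    finally show "(\<Sum>i. ennreal a * indicator (A i) 0 + (\<integral>\<^sup>+t. ennreal (psi t) * indicator (A i) t \<partial>lborel))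
        = ennreal a * indicator (\<Union> (range A)) 0 + (\<integral>\<^sup>+t. ennreal (psi t) * indicator (\<Union> (range A)) t \<partial>lborel)" .
  qed
  have em: "emeasure M A = ennreal a * emeasure R0 A + emeasure D A" if "A \<in> sets borel" for A
    unfolding M_def using emeasure_measure_of_sigma[OF sa pos ca that] mu[OF that] by simp
  show sM: "sets M = sets borel" unfolding M_def using sigma_algebra.sets_measure_of_eq[OF sa] by simp
  have spM: "space M = UNIV" unfolding M_def using sigma_algebra.space_measure_of_eq[OF sa] by simp
  have mcong: "measurable M N = measurable borel N" for N :: "'b measure"
    by (rule measurable_cong_sets[OF sM refl])
  have nn: "(\<integral>\<^sup>+x. g x \<partial>M) = ennreal a * (\<integral>\<^sup>+x. g x \<partial>R0) + (\<integral>\<^sup>+x. g x \<partial>D)"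
    if g: "g \<in> borel_measurable borel" for g :: "real \<Rightarrow> ennreal"
    using g
  proof (induction rule: borel_measurable_induct)
    case (cong f g)
    then have "f = g" by auto
    with cong show ?case by simp
  next
    case (set A)
    then show ?case using em[OF set] sM
      by (simp add: measurable_cong_sets)
  next
    case (mult u c)
    have mu: "u \<in> borel_measurable M" "u \<in> borel_measurable R0" "u \<in> borel_measurable D"
      using mult(2) by (auto simp: mcong measurable_cong_sets[OF sR0(1) refl] measurable_cong_sets[OF sD(1) refl])
    show ?case using mult(4)
      by (simp add: nn_integral_cmult mu algebra_simps)
  next
    case (add u v)
    have mu: "u \<in> borel_measurable M" "u \<in> borel_measurable R0" "u \<in> borel_measurable D"
      using add(1) by (auto simp: mcong measurable_cong_sets[OF sR0(1) refl] measurable_cong_sets[OF sD(1) refl])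
    have mv: "v \<in> borel_measurable M" "v \<in> borel_measurable R0" "v \<in> borel_measurable D"
      using add by (auto simp: mcong measurable_cong_sets[OF sR0(1) refl] measurable_cong_sets[OF sD(1) refl])
    show ?case using add
      by (simp add: nn_integral_add mu mv algebra_simps)
  next
    case (seq U)
    have incU: "incseq U" using seq by blast
    have PU: "\<And>i. (\<integral>\<^sup>+x. U i x \<partial>M) = ennreal a * (\<integral>\<^sup>+x. U i x \<partial>R0) + (\<integral>\<^sup>+x. U i x \<partial>D)" using seq by blast
    have mU: "U i \<in> borel_measurable M" "U i \<in> borel_measurable R0" "U i \<in> borel_measurable D" for i
      using seq(1) by (auto simp: mcong measurable_cong_sets[OF sR0(1) refl] measurable_cong_sets[OF sD(1) refl])
    have inc: "incseq (\<lambda>i. ennreal a * integral\<^sup>N R0 (U i))" "incseq (\<lambda>i. integral\<^sup>N D (U i))"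
      using incU unfolding incseq_def by (auto intro!: nn_integral_mono mult_left_mono simp: le_fun_def)
    have "(\<integral>\<^sup>+x. (SUP i. U i) x \<partial>M) = (SUP i. integral\<^sup>N M (U i))"
      using nn_integral_monotone_convergence_SUP[OF incU mU(1)] by (simp add: SUP_apply image_comp)
    also have "\<dots> = (SUP i. ennreal a * integral\<^sup>N R0 (U i) + integral\<^sup>N D (U i))"
      using PU by simp
    also have "\<dots> = (SUP i. ennreal a * integral\<^sup>N R0 (U i)) + (SUP i. integral\<^sup>N D (U i))"
      by (rule ennreal_SUP_add[OF inc])
    also have "\<dots> = ennreal a * (SUP i. integral\<^sup>N R0 (U i)) + (SUP i. integral\<^sup>N D (U i))"
      by (simp add: SUP_mult_left_ennreal)
    also have "\<dots> = ennreal a * (\<integral>\<^sup>+x. (SUP i. U i) x \<partial>R0) + (\<integral>\<^sup>+x. (SUP i. U i) x \<partial>D)"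
      using nn_integral_monotone_convergence_SUP[OF incU mU(2)]
        nn_integral_monotone_convergence_SUP[OF incU mU(3)] by (simp add: SUP_apply image_comp)
    finally show ?case .
  qed
  have psiI: "(\<integral>\<^sup>+t. ennreal (psi t) \<partial>lborel) < \<infinity>"
    using psi_int psi_nn by (simp add: nn_integral_eq_integral)
  have "emeasure M UNIV = ennreal a * emeasure R0 UNIV + emeasure D UNIV" using em by simp
  also have "\<dots> < \<infinity>" using psiI by (simp add: R0_def D_def emeasure_density ennreal_mult_less_top)
  finally have finM: "finite_measure M" using spM by (intro finite_measureI) auto
  show "finite_measure M" by fact
  have nnpos: "integral\<^sup>L M g = a * g 0 + integral\<^sup>L lborel (\<lambda>t. psi t * g t)"
    if gm: "g \<in> borel_measurable borel" and g0: "\<And>t. 0 \<le> g t" and gB: "\<And>t. g t \<le> B" for g B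
  proof -
    have gM: "g \<in> borel_measurable M" using gm by (simp add: mcong)
    have iM: "integrable M g"
      by (rule finite_measure.integrable_const_bound[OF finM, where B=B]) (use gB g0 gM in auto)
    have ipg: "integrable lborel (\<lambda>t. psi t * g t)"
    proof (rule Bochner_Integration.integrable_bound[OF integrable_mult_right[OF psi_int, of B]])
      show "(\<lambda>t. psi t * g t) \<in> borel_measurable lborel" using gm by measurable
      show "AE x in lborel. norm (psi x * g x) \<le> norm (B * psi x)"
      proof (intro AE_I2)
        fix x
        have "psi x * g x \<le> psi x * B" using psi_nn[of x] gB[of x] by (intro mult_left_mono) auto
        moreover have "B * psi x \<le> \<bar>B\<bar> * psi x" using psi_nn[of x] by (intro mult_right_mono) auto
        ultimately show "norm (psi x * g x) \<le> norm (B * psi x)" using psi_nn[of x] g0[of x]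
          by (auto simp: abs_mult mult.commute)
      qed
    qed
    have "ennreal (integral\<^sup>L M g) = (\<integral>\<^sup>+x. ennreal (g x) \<partial>M)"
      using nn_integral_eq_integral[OF iM] g0 by simp
    also have "\<dots> = ennreal a * ennreal (g 0) + (\<integral>\<^sup>+x. ennreal (psi x) * ennreal (g x) \<partial>lborel)"
      using nn[of "\<lambda>x. ennreal (g x)"] gm
      by (simp add: R0_def D_def nn_integral_return nn_integral_density)
    also have "(\<integral>\<^sup>+x. ennreal (psi x) * ennreal (g x) \<partial>lborel) = (\<integral>\<^sup>+x. ennreal (psi x * g x) \<partial>lborel)"
      using psi_nn g0 by (intro nn_integral_cong) (simp add: ennreal_mult)
    also have "\<dots> = ennreal (integral\<^sup>L lborel (\<lambda>t. psi t * g t))"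
      using nn_integral_eq_integral[OF ipg] psi_nn g0 by simp
    also have "ennreal a * ennreal (g 0) + ennreal (integral\<^sup>L lborel (\<lambda>t. psi t * g t))
        = ennreal (a * g 0 + integral\<^sup>L lborel (\<lambda>t. psi t * g t))"
      using a g0 psi_nn by (simp add: ennreal_mult ennreal_plus integral_nonneg)
    finally show ?thesis
      using a g0 psi_nn by (subst (asm) ennreal_inj) (auto intro!: integral_nonneg)
  qed
  fix f :: "real \<Rightarrow> real" and B :: real
  assume fm: "f \<in> borel_measurable borel" and fB: "\<And>t. \<bar>f t\<bar> \<le> B"
  define fp where "fp t = max (f t) 0" for t
  define fn where "fn t = max (- f t) 0" for t
  have fpm: "fp \<in> borel_measurable borel" "fn \<in> borel_measurable borel"
    using fm unfolding fp_def[abs_def] fn_def[abs_def] by measurable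
  have fpB: "fp t \<le> B" "fn t \<le> B" for t using fB[of t] by (auto simp: fp_def fn_def)
  have fdec: "f t = fp t - fn t" for t by (auto simp: fp_def fn_def)
  have iM: "integrable M h" if "h \<in> borel_measurable borel" "\<And>t. \<bar>h t\<bar> \<le> B" for h
    by (rule finite_measure.integrable_const_bound[OF finM, where B=B]) (use that in \<open>auto simp: mcong\<close>)
  have il: "integrable lborel (\<lambda>t. psi t * h t)" if "h \<in> borel_measurable borel" "\<And>t. \<bar>h t\<bar> \<le> B" for h
  proof (rule Bochner_Integration.integrable_bound[OF integrable_mult_right[OF psi_int, of B]])
    show "(\<lambda>t. psi t * h t) \<in> borel_measurable lborel" using that by measurable
    show "AE x in lborel. norm (psi x * h x) \<le> norm (B * psi x)"
    proof (intro AE_I2)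
      fix x
      have "psi x * \<bar>h x\<bar> \<le> psi x * B" using psi_nn[of x] that(2)[of x] by (intro mult_left_mono) auto
      moreover have "B * psi x \<le> \<bar>B\<bar> * psi x" using psi_nn[of x] by (intro mult_right_mono) auto
      ultimately show "norm (psi x * h x) \<le> norm (B * psi x)" using psi_nn[of x]
        by (auto simp: abs_mult mult.commute)
    qed
  qed
  have fpB': "\<bar>fp t\<bar> \<le> B" "\<bar>fn t\<bar> \<le> B" for t using fB[of t] by (auto simp: fp_def fn_def)
  have "integral\<^sup>L M f = integral\<^sup>L M (\<lambda>t. fp t - fn t)" by (simp add: fdec[symmetric])
  also have "\<dots> = integral\<^sup>L M fp - integral\<^sup>L M fn"
    by (rule Bochner_Integration.integral_diff[OF iM[OF fpm(1) fpB'(1)] iM[OF fpm(2) fpB'(2)]])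
  also have "\<dots> = (a * fp 0 + integral\<^sup>L lborel (\<lambda>t. psi t * fp t)) - (a * fn 0 + integral\<^sup>L lborel (\<lambda>t. psi t * fn t))"
  proof -
    have fp0: "\<And>t. 0 \<le> fp t" "\<And>t. 0 \<le> fn t" by (auto simp: fp_def fn_def)
    show ?thesis using nnpos[OF fpm(1) fp0(1) fpB(1)] nnpos[OF fpm(2) fp0(2) fpB(2)] by simp
  qed
  finally have e1: "integral\<^sup>L M f = (a * fp 0 + integral\<^sup>L lborel (\<lambda>t. psi t * fp t)) - (a * fn 0 + integral\<^sup>L lborel (\<lambda>t. psi t * fn t))" .
  have e2: "integral\<^sup>L lborel (\<lambda>t. psi t * fp t) - integral\<^sup>L lborel (\<lambda>t. psi t * fn t)
      = integral\<^sup>L lborel (\<lambda>t. psi t * fp t - psi t * fn t)"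
    by (rule Bochner_Integration.integral_diff[OF il[OF fpm(1) fpB'(1)] il[OF fpm(2) fpB'(2)], symmetric])
  have e3: "(\<lambda>t. psi t * fp t - psi t * fn t) = (\<lambda>t. psi t * f t)"
    by (auto simp: fdec right_diff_distrib)
  have e4: "a * fp 0 - a * fn 0 = a * f 0" by (simp add: fdec right_diff_distrib)
  show "integral\<^sup>L M f = a * f 0 + integral\<^sup>L lborel (\<lambda>t. psi t * f t)"
    using e1 e2 e3 e4 by simp
qed



lemma psi_ineq:
  fixes u k :: real assumes "u > 0" "k \<ge> 0"
  shows "u * k / (1 + u\<^sup>2) \<le> k / u * min 1 (u\<^sup>2)"
proof (cases "u\<^sup>2 \<le> 1")
  case True
  have "u * k / (1 + u\<^sup>2) \<le> u * k / 1" using assms by (intro divide_left_mono) (auto intro: add_pos_nonneg)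
  then show ?thesis using True assms by (simp add: power2_eq_square mult.commute)
next
  case False
  have "u * k * u \<le> k * (1 + u\<^sup>2)" using assms by (simp add: power2_eq_square algebra_simps)
  then have "u * k / (1 + u\<^sup>2) \<le> k / u" using assms by (simp add: field_simps add_pos_nonneg)
  then show ?thesis using False by simp
qed

lemma k_facts:
  fixes k :: "real \<Rightarrow> real"
  assumes k_nonneg: "\<And>t. t \<noteq> 0 \<Longrightarrow> 0 \<le> k t"
    and k_inc: "mono_on {..<0} k"
    and k_dec: "antimono_on {0<..} k"
    and k_levy: "levy_measure (density lborel (\<lambda>t. ennreal (indicator (- {0}) t * k t / \<bar>t\<bar>)))"
  shows "(\<lambda>t. \<bar>t\<bar> * k t / (1 + t\<^sup>2)) \<in> borel_measurable borel"
    "\<And>t. 0 \<le> \<bar>t\<bar> * k t / (1 + t\<^sup>2)"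
    "integrable lborel (\<lambda>t. \<bar>t\<bar> * k t / (1 + t\<^sup>2))"
    "countable {t. t \<noteq> 0 \<and> \<not> isCont k t}"
proof -
  have m1: "k \<in> borel_measurable (restrict_space borel {..<0})"
    by (rule borel_measurable_mono_on_fnc[OF k_inc])
  have "mono_on {0<..} (\<lambda>t. - k t)" using k_dec by (auto simp: monotone_on_def)
  then have "(\<lambda>t. - k t) \<in> borel_measurable (restrict_space borel {0<..})"
    by (rule borel_measurable_mono_on_fnc)
  then have m2: "k \<in> borel_measurable (restrict_space borel {0<..})"
    using borel_measurable_uminus[of "\<lambda>t. - k t"] by simp
  have m1': "(\<lambda>t. if t \<in> {..<0} then k t else 0) \<in> borel_measurable borel"
    using m1 by (subst (asm) measurable_restrict_space_iff) auto
  have m2': "(\<lambda>t. if t \<in> {0<..} then k t else 0) \<in> borel_measurable borel"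
    using m2 by (subst (asm) measurable_restrict_space_iff) auto
  define K where "K t = (if t \<in> {..<0} then k t else 0) + (if t \<in> {0<..} then k t else (0::real))" for t
  have Km[measurable]: "K \<in> borel_measurable borel" unfolding K_def[abs_def] using m1' m2' by measurable
  have Kk: "K t = indicator (- {0}) t * k t" for t by (auto simp: K_def)
  have psiK: "\<bar>t\<bar> * k t / (1 + t\<^sup>2) = \<bar>t\<bar> * K t / (1 + t\<^sup>2)" for t by (auto simp: K_def)
  show pm: "(\<lambda>t. \<bar>t\<bar> * k t / (1 + t\<^sup>2)) \<in> borel_measurable borel"
    unfolding psiK by measurable
  show pn: "0 \<le> \<bar>t\<bar> * k t / (1 + t\<^sup>2)" for t
    using k_nonneg[of t] by (cases "t = 0") (auto intro!: divide_nonneg_pos add_pos_nonneg)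
  have dm: "(\<lambda>t. ennreal (indicator (- {0}) t * k t / \<bar>t\<bar>)) \<in> borel_measurable borel"
    unfolding Kk[symmetric] by measurable
  have fin: "(\<integral>\<^sup>+ t. ennreal (min 1 (t\<^sup>2)) \<partial>density lborel (\<lambda>t. ennreal (indicator (- {0}) t * k t / \<bar>t\<bar>))) < \<infinity>"
    using k_levy by (simp add: levy_measure_def)
  also have "(\<integral>\<^sup>+ t. ennreal (min 1 (t\<^sup>2)) \<partial>density lborel (\<lambda>t. ennreal (indicator (- {0}) t * k t / \<bar>t\<bar>)))
      = (\<integral>\<^sup>+ t. ennreal (indicator (- {0}) t * k t / \<bar>t\<bar>) * ennreal (min 1 (t\<^sup>2)) \<partial>lborel)"
    by (rule nn_integral_density) (use dm in auto)
  finally have fin2: "(\<integral>\<^sup>+ t. ennreal (indicator (- {0}) t * k t / \<bar>t\<bar>) * ennreal (min 1 (t\<^sup>2)) \<partial>lborel) < \<infinity>" .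
  have "(\<integral>\<^sup>+ t. ennreal (\<bar>t\<bar> * k t / (1 + t\<^sup>2)) \<partial>lborel)
      \<le> (\<integral>\<^sup>+ t. ennreal (indicator (- {0}) t * k t / \<bar>t\<bar>) * ennreal (min 1 (t\<^sup>2)) \<partial>lborel)"
  proof (rule nn_integral_mono)
    fix t :: real
    show "ennreal (\<bar>t\<bar> * k t / (1 + t\<^sup>2)) \<le> ennreal (indicator (- {0}) t * k t / \<bar>t\<bar>) * ennreal (min 1 (t\<^sup>2))"
    proof (cases "t = 0")
      case True then show ?thesis by simp
    next
      case False
      have "\<bar>t\<bar> * k t / (1 + \<bar>t\<bar>\<^sup>2) \<le> k t / \<bar>t\<bar> * min 1 (\<bar>t\<bar>\<^sup>2)"
        by (rule psi_ineq) (use False k_nonneg in auto)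
      then have "ennreal (\<bar>t\<bar> * k t / (1 + t\<^sup>2)) \<le> ennreal (k t / \<bar>t\<bar> * min 1 (t\<^sup>2))"
        by (intro ennreal_leI) simp
      also have "\<dots> = ennreal (k t / \<bar>t\<bar>) * ennreal (min 1 (t\<^sup>2))"
        using False k_nonneg[of t] by (intro ennreal_mult) auto
      finally show ?thesis using False by simp
    qed
  qed
  then have "(\<integral>\<^sup>+ t. ennreal (\<bar>t\<bar> * k t / (1 + t\<^sup>2)) \<partial>lborel) < \<infinity>" using fin2 by (rule le_less_trans)
  then show "integrable lborel (\<lambda>t. \<bar>t\<bar> * k t / (1 + t\<^sup>2))"
    using pm pn by (intro integrableI_nonneg) auto
  have c1: "countable {a \<in> {..<0}. \<not> isCont k a}"
    by (rule mono_on_ctble_discont_open[OF _ k_inc]) auto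
  have c2: "countable {a \<in> {0<..}. \<not> isCont (\<lambda>t. - k t) a}"
    by (rule mono_on_ctble_discont_open[OF _ \<open>mono_on {0<..} (\<lambda>t. - k t)\<close>]) auto
  have "{t. t \<noteq> 0 \<and> \<not> isCont k t} \<subseteq> {a \<in> {..<0}. \<not> isCont k a} \<union> {a \<in> {0<..}. \<not> isCont (\<lambda>t. - k t) a}"
  proof
    fix t assume t: "t \<in> {t. t \<noteq> 0 \<and> \<not> isCont k t}"
    have "\<not> isCont (\<lambda>t. - k t) t"
    proof
      assume "isCont (\<lambda>t. - k t) t"
      then have "isCont (\<lambda>x. - (- k x)) t" by (rule continuous_minus)
      then show False using t by simp
    qed
    then show "t \<in> {a \<in> {..<0}. \<not> isCont k a} \<union> {a \<in> {0<..}. \<not> isCont (\<lambda>t. - k t) a}"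
      using t by auto
  qed
  then show "countable {t. t \<noteq> 0 \<and> \<not> isCont k t}"
    by (rule countable_subset[OF _ countable_Un[OF c1 c2]])
qed



lemma w_le1: "\<bar>t\<bar> / (1 + t\<^sup>2) \<le> (1::real)"
proof -
  have "0 \<le> (\<bar>t\<bar> - 1)\<^sup>2" by simp
  then have "2 * \<bar>t\<bar> \<le> \<bar>t\<bar>\<^sup>2 + 1" by (simp add: power2_diff)
  then have "\<bar>t\<bar> \<le> 1 + t\<^sup>2" by simp
  moreover have "0 < 1 + t\<^sup>2" by (simp add: add_pos_nonneg)
  ultimately show ?thesis by (simp add: divide_le_eq)
qed

lemma gk_facts:
  fixes \<phi> :: "real \<Rightarrow> real"
  assumes anti: "antimono_on {0<..} \<phi>" and nn: "\<And>s. s > 0 \<Longrightarrow> 0 \<le> \<phi> s" and c: "c > 0"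
  shows "decr (\<lambda>s. \<phi> (max s c) * indicator {..<M} s)"
    "\<And>s. 0 \<le> \<phi> (max s c) * indicator {..<M} s"
    "\<And>s. \<phi> (max s c) * indicator {..<M} s \<le> \<phi> c"
    "\<And>s. s \<ge> M \<Longrightarrow> \<phi> (max s c) * indicator {..<M} s = 0"
    "\<And>s. c \<le> s \<Longrightarrow> s < M \<Longrightarrow> \<phi> (max s c) * indicator {..<M} s = \<phi> s"
    "\<And>s. s > 0 \<Longrightarrow> \<phi> (max s c) * indicator {..<M} s \<le> \<phi> s"
proof -
  have mon: "\<phi> y \<le> \<phi> x" if "0 < x" "x \<le> y" for x y
    using monotone_onD[OF anti, of x y] that by auto
  have nnm: "0 \<le> \<phi> (max s c)" for s using nn c by auto
  show "decr (\<lambda>s. \<phi> (max s c) * indicator {..<M} s)" unfolding decr_def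
  proof (intro allI impI)
    fix x y :: real assume xy: "x \<le> y"
    show "\<phi> (max y c) * indicator {..<M} y \<le> \<phi> (max x c) * indicator {..<M} x"
    proof (cases "y < M")
      case True
      then have "x < M" using xy by auto
      then show ?thesis using True mon[of "max x c" "max y c"] xy c by (auto simp: indicator_def)
    next
      case False then show ?thesis using nnm[of x] by (auto simp: indicator_def)
    qed
  qed
  show "0 \<le> \<phi> (max s c) * indicator {..<M} s" for s using nnm[of s] by (auto simp: indicator_def)
  show "\<phi> (max s c) * indicator {..<M} s \<le> \<phi> c" for s
    using mon[of c "max s c"] c nn[of c] by (auto simp: indicator_def)
  show "s \<ge> M \<Longrightarrow> \<phi> (max s c) * indicator {..<M} s = 0" for s by (auto simp: indicator_def)
  show "c \<le> s \<Longrightarrow> s < M \<Longrightarrow> \<phi> (max s c) * indicator {..<M} s = \<phi> s" for s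
    by (auto simp: indicator_def max_def)
  show "s > 0 \<Longrightarrow> \<phi> (max s c) * indicator {..<M} s \<le> \<phi> s" for s
    using mon[of s "max s c"] nn[of s] by (auto simp: indicator_def)
qed

lemma R_conv:
  fixes \<phi> :: "real \<Rightarrow> real"
  assumes anti: "antimono_on {0<..} \<phi>" and nn: "\<And>s. s > 0 \<Longrightarrow> 0 \<le> \<phi> s"
    and t: "t > 0" and cont: "isCont \<phi> t"
  shows "(\<lambda>n. R (1/(4*(real n+1))) (\<lambda>s. \<phi> (max s (1/(real n+1))) * indicator {..<real n+1} s) t) \<longlonglongrightarrow> \<phi> t"
proof (rule tendsto_sandwich)
  define g where "g n s = \<phi> (max s (1/(real n+1))) * indicator {..<real n+1} s" for n s
  define h where "h n = 1/(4*(real n+1))" for n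
  have gf: "decr (g n)" "\<And>s. 0 \<le> g n s" "\<And>s. g n s \<le> \<phi> (1/(real n+1))"
    "\<And>s. s \<ge> real n+1 \<Longrightarrow> g n s = 0"
    "\<And>s. 1/(real n+1) \<le> s \<Longrightarrow> s < real n+1 \<Longrightarrow> g n s = \<phi> s"
    "\<And>s. s > 0 \<Longrightarrow> g n s \<le> \<phi> s" for n
    unfolding g_def using gk_facts[OF anti nn, where c="1/(real n+1)" and M="real n+1"] by auto
  have hp: "h n > 0" for n by (simp add: h_def)
  have RB: "g n (t + 3 * h n) \<le> R (h n) (g n) t" "R (h n) (g n) t \<le> g n t" for n
    using R_basic[OF gf(1) hp gf(2) gf(3) gf(4)] by auto
  show "\<forall>\<^sub>F n in sequentially. R (1/(4*(real n+1))) (\<lambda>s. \<phi> (max s (1/(real n+1))) * indicator {..<real n+1} s) t \<le> \<phi> t"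
  proof -
    have X: "\<And>n. R (h n) (g n) t \<le> \<phi> t" using RB(2) gf(6)[OF t] order_trans by blast
    show ?thesis using X unfolding h_def g_def[abs_def] by (intro always_eventually) blast
  qed
  obtain N :: nat where N: "real N \<ge> 1/t" "real N \<ge> t + 1"
    using real_arch_simple[of "max (1/t) (t+1)"] by auto
  have ev: "\<phi> (t + 3 * h n) \<le> R (h n) (g n) t" if "n \<ge> N" for n
  proof -
    have "real n \<ge> real N" using that by simp
    then have n1: "real n \<ge> 1/t" "real n \<ge> t + 1" using N by auto
    have "1 \<le> real n * t" using n1(1) t by (simp add: pos_divide_le_eq)
    then have "1 \<le> t * (real n + 1)" using t by (simp add: algebra_simps)
    then have "1/(real n+1) \<le> t" by (simp add: divide_le_eq)
    moreover have "h n \<le> 1/4" by (simp add: h_def divide_le_eq)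
    ultimately have "g n (t + 3 * h n) = \<phi> (t + 3 * h n)" using n1(2) hp[of n] by (intro gf(5)) auto
    then show ?thesis using RB(1)[of n] by simp
  qed
  then show "\<forall>\<^sub>F n in sequentially. \<phi> (t + 3 * h n) \<le> R (1/(4*(real n+1))) (\<lambda>s. \<phi> (max s (1/(real n+1))) * indicator {..<real n+1} s) t"
    using ev unfolding eventually_sequentially h_def g_def[abs_def] by blast
  have "(\<lambda>n. t + 3 * h n) \<longlonglongrightarrow> t + 3 * 0"
  proof (intro tendsto_intros)
    have "(\<lambda>n. (1/4) * inverse (real (Suc n))) \<longlonglongrightarrow> (1/4) * 0"
      by (intro tendsto_intros LIMSEQ_inverse_real_of_nat)
    moreover have "h = (\<lambda>n. (1/4) * inverse (real (Suc n)))"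
      unfolding h_def by (rule ext) (simp add: field_simps)
    ultimately show "h \<longlonglongrightarrow> 0" by simp
  qed
  then show "(\<lambda>n. \<phi> (t + 3 * h n)) \<longlonglongrightarrow> \<phi> t"
    using isCont_tendsto_compose[OF cont] by simp
  show "(\<lambda>n. \<phi> t) \<longlonglongrightarrow> \<phi> t" by simp
qed



lemma beta_int:
  fixes \<beta> :: "nat \<Rightarrow> real \<Rightarrow> real" and g :: "real \<Rightarrow> real"
  assumes \<beta>m[measurable]: "\<And>n. \<beta> n \<in> borel_measurable borel"
    and \<beta>0: "\<And>n t. 0 \<le> \<beta> n t" and \<beta>1: "\<And>n t. \<beta> n t \<le> 1"
    and \<beta>s: "\<And>n t. 1/(real n+1) \<le> \<bar>t\<bar> \<Longrightarrow> \<beta> n t = 0"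
    and gm[measurable]: "g \<in> borel_measurable borel" and gB: "\<And>t. \<bar>g t\<bar> \<le> C"
  shows "integrable lborel (\<lambda>t. \<bar>t\<bar>/(1+t\<^sup>2) * \<beta> n t * g t)"
proof -
  define w where "w t = \<bar>t\<bar>/(1+t\<^sup>2)" for t :: real
  have w0: "0 \<le> w t" for t by (simp add: w_def add_pos_nonneg)
  have w1: "w t \<le> 1" for t using w_le1 by (simp add: w_def)
  have wm[measurable]: "w \<in> borel_measurable borel" unfolding w_def[abs_def] by measurable
  have "integrable lborel (\<lambda>t. w t * \<beta> n t * g t)"
  proof (rule Bochner_Integration.integrable_bound)
    show "integrable lborel (\<lambda>t::real. C * indicator {-1..1} t :: real)"
      by (intro integrable_mult_right integrable_real_indicator) (auto simp: emeasure_lborel_Icc)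
    show "(\<lambda>t. w t * \<beta> n t * g t) \<in> borel_measurable lborel" by measurable
    show "AE x in lborel. norm (w x * \<beta> n x * g x) \<le> norm (C * indicator {- 1..1} x :: real)"
    proof (intro AE_I2)
      fix x :: real
      show "norm (w x * \<beta> n x * g x) \<le> norm (C * indicator {- 1..1} x :: real)"
      proof (cases "\<bar>x\<bar> \<le> 1")
        case True
        have "\<bar>w x * \<beta> n x\<bar> \<le> 1" using w0[of x] w1[of x] \<beta>0[of n x] \<beta>1[of n x]
          by (simp add: abs_mult mult_le_one)
        then have "\<bar>w x * \<beta> n x * g x\<bar> \<le> 1 * \<bar>g x\<bar>" unfolding abs_mult[of _ "g x"]
          by (intro mult_right_mono) auto
        also have "\<dots> \<le> \<bar>C\<bar>" using gB[of x] by simp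
        finally show ?thesis using True by (auto simp: indicator_def abs_mult)
      next
        case False
        have "1/(real n+1) \<le> 1" by (simp add: divide_le_eq)
        then have "1/(real n+1) \<le> \<bar>x\<bar>" using False by linarith
        then show ?thesis using \<beta>s[of n x] by simp
      qed
    qed
  qed
  then show ?thesis by (simp add: w_def)
qed

lemma bump_conv:
  fixes \<beta> :: "nat \<Rightarrow> real \<Rightarrow> real" and f :: "real \<Rightarrow> real" and a B :: real
  assumes \<beta>m[measurable]: "\<And>n. \<beta> n \<in> borel_measurable borel"
    and \<beta>0: "\<And>n t. 0 \<le> \<beta> n t" and \<beta>1: "\<And>n t. \<beta> n t \<le> 1"
    and \<beta>s: "\<And>n t. 1/(real n+1) \<le> \<bar>t\<bar> \<Longrightarrow> \<beta> n t = 0"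
    and Mp: "\<And>n. 0 < integral\<^sup>L lborel (\<lambda>t. \<bar>t\<bar>/(1+t\<^sup>2) * \<beta> n t)"
    and a: "0 \<le> a" and fm[measurable]: "f \<in> borel_measurable borel" and fB: "\<And>t. \<bar>f t\<bar> \<le> B"
    and fc: "isCont f 0"
  shows "(\<lambda>n. a / integral\<^sup>L lborel (\<lambda>t. \<bar>t\<bar>/(1+t\<^sup>2) * \<beta> n t) *
            integral\<^sup>L lborel (\<lambda>t. \<bar>t\<bar>/(1+t\<^sup>2) * \<beta> n t * f t)) \<longlonglongrightarrow> a * f 0"
proof (rule LIMSEQ_I)
  define w where "w t = \<bar>t\<bar>/(1+t\<^sup>2)" for t :: real
  have w0: "0 \<le> w t" for t by (simp add: w_def add_pos_nonneg)
  have w1: "w t \<le> 1" for t using w_le1 by (simp add: w_def)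
  have wm[measurable]: "w \<in> borel_measurable borel" unfolding w_def[abs_def] by measurable
  have intI: "integrable lborel (\<lambda>t. w t * \<beta> n t * g t)"
    if gm[measurable]: "g \<in> borel_measurable borel" and gB: "\<And>t. \<bar>g t\<bar> \<le> C" for g C n
    using beta_int[OF \<beta>m \<beta>0 \<beta>1 \<beta>s gm gB] by (simp add: w_def)
  define Mb where "Mb n = integral\<^sup>L lborel (\<lambda>t. w t * \<beta> n t)" for n
  have Mp': "0 < Mb n" for n using Mp[of n] by (simp add: Mb_def w_def)
  have intw: "integrable lborel (\<lambda>t. w t * \<beta> n t)" for n
    using intI[of "\<lambda>_. 1" 1 n] by simp
  have intf: "integrable lborel (\<lambda>t. w t * \<beta> n t * f t)" for n by (rule intI[OF fm fB])
  have fB2: "\<bar>f t - f 0\<bar> \<le> 2 * B" for t using fB[of t] fB[of 0] by linarith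
  have intd: "integrable lborel (\<lambda>t. w t * \<beta> n t * (f t - f 0))" for n
    by (rule intI[where C="2*B"]) (use fB2 in auto)
  fix r :: real assume r: "0 < r"
  define \<epsilon> where "\<epsilon> = r / (a + 1)"
  have \<epsilon>: "0 < \<epsilon>" using r a by (simp add: \<epsilon>_def)
  obtain \<delta> where \<delta>: "\<delta> > 0" "\<And>x. x \<noteq> 0 \<Longrightarrow> \<bar>x\<bar> < \<delta> \<Longrightarrow> \<bar>f x - f 0\<bar> < \<epsilon>"
    using fc \<epsilon> unfolding isCont_def LIM_eq by (metis diff_zero real_norm_def)
  obtain N :: nat where N: "real N \<ge> 1 / \<delta>" using real_arch_simple by blast
  show "\<exists>no. \<forall>n\<ge>no. norm (a / integral\<^sup>L lborel (\<lambda>t. \<bar>t\<bar> / (1 + t\<^sup>2) * \<beta> n t) *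
            integral\<^sup>L lborel (\<lambda>t. \<bar>t\<bar> / (1 + t\<^sup>2) * \<beta> n t * f t) - a * f 0) < r"
  proof (intro exI allI impI)
    fix n assume n: "n \<ge> N"
    have nd: "1/(real n+1) < \<delta>"
    proof -
      have "1 / \<delta> < real n + 1" using N n by linarith
      then show ?thesis using \<delta>(1) by (simp add: divide_less_eq mult.commute)
    qed
    have pt: "\<bar>w t * \<beta> n t * (f t - f 0)\<bar> \<le> \<epsilon> * (w t * \<beta> n t)" for t
    proof (cases "\<beta> n t = 0")
      case True then show ?thesis by simp
    next
      case False
      then have "\<bar>t\<bar> < 1/(real n+1)" using \<beta>s[of n t] by force
      then have "\<bar>t\<bar> < \<delta>" using nd by linarith
      then have "\<bar>f t - f 0\<bar> \<le> \<epsilon>" using \<delta>(2)[of t] \<epsilon> by (cases "t = 0") auto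
      moreover have "0 \<le> w t * \<beta> n t" using w0[of t] \<beta>0[of n t] by simp
      ultimately have "\<bar>f t - f 0\<bar> * (w t * \<beta> n t) \<le> \<epsilon> * (w t * \<beta> n t)"
        by (rule mult_right_mono)
      then show ?thesis using w0[of t] \<beta>0[of n t]
        by (simp add: abs_mult mult.commute)
    qed
    have "\<bar>integral\<^sup>L lborel (\<lambda>t. w t * \<beta> n t * (f t - f 0))\<bar>
        \<le> integral\<^sup>L lborel (\<lambda>t. \<bar>w t * \<beta> n t * (f t - f 0)\<bar>)"
      using integral_norm_bound[of lborel "\<lambda>t. w t * \<beta> n t * (f t - f 0)"] by simp
    also have "\<dots> \<le> integral\<^sup>L lborel (\<lambda>t. \<epsilon> * (w t * \<beta> n t))"
      by (rule integral_mono) (use intd intw pt in auto)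
    also have "\<dots> = \<epsilon> * Mb n" by (simp add: Mb_def)
    finally have bd: "\<bar>integral\<^sup>L lborel (\<lambda>t. w t * \<beta> n t * (f t - f 0))\<bar> \<le> \<epsilon> * Mb n" .
    have eq: "integral\<^sup>L lborel (\<lambda>t. w t * \<beta> n t * (f t - f 0))
        = integral\<^sup>L lborel (\<lambda>t. w t * \<beta> n t * f t) - f 0 * Mb n"
    proof -
      have "integral\<^sup>L lborel (\<lambda>t. w t * \<beta> n t * (f t - f 0))
          = integral\<^sup>L lborel (\<lambda>t. w t * \<beta> n t * f t - f 0 * (w t * \<beta> n t))"
        by (simp add: algebra_simps)
      also have "\<dots> = integral\<^sup>L lborel (\<lambda>t. w t * \<beta> n t * f t) - integral\<^sup>L lborel (\<lambda>t. f 0 * (w t * \<beta> n t))"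
        by (rule Bochner_Integration.integral_diff) (use intf intw in auto)
      finally show ?thesis by (simp add: Mb_def)
    qed
    have "a / Mb n * integral\<^sup>L lborel (\<lambda>t. w t * \<beta> n t * f t) - a * f 0
        = a / Mb n * integral\<^sup>L lborel (\<lambda>t. w t * \<beta> n t * (f t - f 0))"
      unfolding eq using Mp'[of n] by (simp add: field_simps)
    then have "\<bar>a / Mb n * integral\<^sup>L lborel (\<lambda>t. w t * \<beta> n t * f t) - a * f 0\<bar>
        = a / Mb n * \<bar>integral\<^sup>L lborel (\<lambda>t. w t * \<beta> n t * (f t - f 0))\<bar>"
      using Mp'[of n] a by (simp add: abs_mult)
    also have "\<dots> \<le> a / Mb n * (\<epsilon> * Mb n)"
      using bd a Mp'[of n] by (intro mult_left_mono) auto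
    also have "\<dots> = a * \<epsilon>" using Mp'[of n] by simp
    also have "\<dots> < r"
    proof -
      have "a * \<epsilon> = r * (a / (a + 1))" using a by (simp add: \<epsilon>_def)
      also have "\<dots> < r * 1" using r a by (intro mult_strict_left_mono) auto
      finally show ?thesis by simp
    qed
    finally show "norm (a / integral\<^sup>L lborel (\<lambda>t. \<bar>t\<bar> / (1 + t\<^sup>2) * \<beta> n t) *
            integral\<^sup>L lborel (\<lambda>t. \<bar>t\<bar> / (1 + t\<^sup>2) * \<beta> n t * f t) - a * f 0) < r"
      by (simp add: Mb_def w_def)
  qed
qed



theorem lemma4p1:
  fixes k :: "real \<Rightarrow> real" and a :: real
  assumes k_nonneg: "\<And>t. t \<noteq> 0 \<Longrightarrow> 0 \<le> k t"
    and k_inc: "mono_on {..<0} k"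
    and k_dec: "antimono_on {0<..} k"
    and k_levy: "levy_measure (density lborel (\<lambda>t. ennreal (indicator (- {0}) t * k t / \<bar>t\<bar>)))"
    and a_nonneg: "0 \<le> a"
  shows "\<exists>kn :: nat \<Rightarrow> real \<Rightarrow> real.
           (\<forall>n. (\<forall>t. t \<noteq> 0 \<longrightarrow> 0 \<le> kn n t) \<and>
                smooth_decay (kn n) \<and>
                mono_on {..<0} (kn n) \<and> antimono_on {0<..} (kn n) \<and>
                (\<forall>t. t \<noteq> 0 \<longrightarrow> 0 < kn n t)) \<and>
           weak_conv_finite
             (\<lambda>n. density lborel (\<lambda>t. ennreal (\<bar>t\<bar> * kn n t / (1 + t\<^sup>2))))
             (limit_measure a k)"
proof -
  note kf = k_facts[OF k_nonneg k_inc k_dec k_levy]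
  define psi where "psi t = \<bar>t\<bar> * k t / (1 + t\<^sup>2)" for t
  have psim[measurable]: "psi \<in> borel_measurable borel" using kf(1) by (simp add: psi_def[abs_def])
  have psi0: "0 \<le> psi t" for t using kf(2) by (simp add: psi_def)
  have psiI: "integrable lborel psi" using kf(3) by (simp add: psi_def[abs_def])
  define w where "w t = \<bar>t\<bar> / (1 + t\<^sup>2)" for t :: real
  have w0: "0 \<le> w t" for t by (simp add: w_def add_pos_nonneg)
  have wm[measurable]: "w \<in> borel_measurable borel" unfolding w_def[abs_def] by measurable
  define k2 where "k2 s = k (-s)" for s
  have k_anti: "antimono_on {0<..} k" by (rule k_dec)
  have k2_anti: "antimono_on {0<..} k2"
    using k_inc unfolding k2_def monotone_on_def by auto
  have k_nn: "\<And>s. s > 0 \<Longrightarrow> 0 \<le> k s" using k_nonneg by auto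
  have k2_nn: "\<And>s. s > 0 \<Longrightarrow> 0 \<le> k2 s" using k_nonneg by (auto simp: k2_def)
  define hh where "hh n = 1 / (4 * (real n + 1))" for n :: nat
  have hh0: "hh n > 0" for n by (simp add: hh_def)
  define gp where "gp n s = k (max s (1/(real n+1))) * indicator {..<real n+1} s" for n s
  define gm where "gm n s = k2 (max s (1/(real n+1))) * indicator {..<real n+1} s" for n s
  define gi where "gi n s = (indicator {..<1/(real n+1)} s :: real)" for n s
  have gpf: "decr (gp n)" "\<And>s. 0 \<le> gp n s" "\<And>s. gp n s \<le> k (1/(real n+1))"
    "\<And>s. s \<ge> real n+1 \<Longrightarrow> gp n s = 0" "\<And>s. s > 0 \<Longrightarrow> gp n s \<le> k s" for n
    unfolding gp_def using gk_facts[OF k_anti k_nn, where c="1/(real n+1)" and M="real n+1"] by auto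
  have gmf: "decr (gm n)" "\<And>s. 0 \<le> gm n s" "\<And>s. gm n s \<le> k2 (1/(real n+1))"
    "\<And>s. s \<ge> real n+1 \<Longrightarrow> gm n s = 0" "\<And>s. s > 0 \<Longrightarrow> gm n s \<le> k2 s" for n
    unfolding gm_def using gk_facts[OF k2_anti k2_nn, where c="1/(real n+1)" and M="real n+1"] by auto
  have gif: "decr (gi n)" "\<And>s. 0 \<le> gi n s" "\<And>s. gi n s \<le> 1"
    "\<And>s. s \<ge> 1/(real n+1) \<Longrightarrow> gi n s = 0" for n
    unfolding gi_def decr_def by (auto simp: indicator_def)
  define Pp where "Pp n = R (hh n) (gp n)" for n
  define Pm where "Pm n = R (hh n) (gm n)" for n
  define Bi where "Bi n = R (hh n) (gi n)" for n
  have RPp: "decr (Pp n)" "0 \<le> Pp n t" "Pp n t \<le> k (1/(real n+1))"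
    "t \<ge> real n+1 \<Longrightarrow> Pp n t = 0" "gp n (t + 3*hh n) \<le> Pp n t" "Pp n t \<le> gp n t"
    "continuous_on UNIV (Pp n)" for n t
    using R_basic[OF gpf(1)[of n] hh0[of n] gpf(2)[of n] gpf(3)[of n] gpf(4)[of n]] unfolding Pp_def by auto
  have RPm: "decr (Pm n)" "0 \<le> Pm n t" "Pm n t \<le> k2 (1/(real n+1))"
    "t \<ge> real n+1 \<Longrightarrow> Pm n t = 0" "gm n (t + 3*hh n) \<le> Pm n t" "Pm n t \<le> gm n t"
    "continuous_on UNIV (Pm n)" for n t
    using R_basic[OF gmf(1)[of n] hh0[of n] gmf(2)[of n] gmf(3)[of n] gmf(4)[of n]] unfolding Pm_def by auto
  have RBi: "decr (Bi n)" "0 \<le> Bi n t" "Bi n t \<le> 1"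
    "t \<ge> 1/(real n+1) \<Longrightarrow> Bi n t = 0" "gi n (t + 3*hh n) \<le> Bi n t" "Bi n t \<le> gi n t"
    "continuous_on UNIV (Bi n)" for n t
    using R_basic[OF gif(1)[of n] hh0[of n] gif(2)[of n] gif(3)[of n] gif(4)[of n]] unfolding Bi_def by auto
  have CPp: "C2B (Pp n)" for n unfolding Pp_def by (rule R_C2B[OF gpf(1) hh0 gpf(2) gpf(3) gpf(4)])
  have CPm: "C2B (Pm n)" for n unfolding Pm_def by (rule R_C2B[OF gmf(1) hh0 gmf(2) gmf(3) gmf(4)])
  have CBi: "C2B (Bi n)" for n unfolding Bi_def by (rule R_C2B[OF gif(1) hh0 gif(2) gif(3) gif(4)])
  define p where "p n t = (if 0 < t then Pp n t else Pm n (-t))" for n t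
  define \<beta> where "\<beta> n t = Bi n \<bar>t\<bar>" for n t
  define Mb where "Mb n = integral\<^sup>L lborel (\<lambda>t. \<bar>t\<bar>/(1+t\<^sup>2) * \<beta> n t)" for n
  define c where "c n = a / Mb n" for n
  define \<gamma> where "\<gamma> t = 1 / (1 + t\<^sup>2)^3" for t :: real
  define Fp where "Fp n t = Pp n t + c n * Bi n t + 1/(real n+1) * \<gamma> t" for n t
  define Fm where "Fm n t = Pm n t + c n * Bi n t + 1/(real n+1) * \<gamma> t" for n t
  define kn where "kn n t = (if 0 < t then Fp n t else Fm n (-t))" for n t
  have cpos: "0 \<le> c n" if "Mb n > 0" for n using that a_nonneg by (simp add: c_def)
  have Bi_one: "Bi n s \<ge> 1" if "s < 1/(4*(real n+1))" for n s
  proof -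
    have e: "1/(4*(real n+1)) + 3 * hh n = 1/(real n+1)" by (simp add: hh_def field_simps)
    have "s + 3 * hh n < 1/(real n+1)" using that e by linarith
    then have "gi n (s + 3 * hh n) = 1" by (simp add: gi_def)
    moreover have "gi n (s + 3 * hh n) \<le> Bi n s" using RBi(5) by simp
    ultimately show ?thesis by simp
  qed
  have \<beta>m[measurable]: "\<beta> n \<in> borel_measurable borel" for n
  proof -
    have "continuous_on UNIV (\<lambda>t. Bi n \<bar>t\<bar>)"
      by (intro continuous_on_compose2[OF RBi(7)] continuous_intros) auto
    then show ?thesis unfolding \<beta>_def[abs_def] by (rule borel_measurable_continuous_onI)
  qed
  have \<beta>0: "0 \<le> \<beta> n t" for n t using RBi(2) by (simp add: \<beta>_def)
  have \<beta>1: "\<beta> n t \<le> 1" for n t using RBi(3) by (simp add: \<beta>_def)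
  have \<beta>s: "1/(real n+1) \<le> \<bar>t\<bar> \<Longrightarrow> \<beta> n t = 0" for n t using RBi(4) by (simp add: \<beta>_def)
  have Mbpos: "Mb n > 0" for n
  proof -
    define e where "e = 1/(8*(real n+1))"
    have e0: "e > 0" by (simp add: e_def)
    have e1: "2 * e \<le> 1" by (simp add: e_def divide_le_eq)
    have lb: "e/2 * indicator {e..3*e/2} t \<le> \<bar>t\<bar>/(1+t\<^sup>2) * \<beta> n t" for t :: real
    proof (cases "t \<in> {e..3*e/2}")
      case True
      then have t: "e \<le> t" "t \<le> 3*e/2" by auto
      have "t < 1/(4*(real n+1))" using t e0 by (simp add: e_def field_simps)
      then have b1: "\<beta> n t \<ge> 1" using Bi_one[of t n] t e0 by (simp add: \<beta>_def)
      have "t\<^sup>2 \<le> 1" using t e1 e0 by (simp add: abs_square_le_1)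
      moreover have "0 < 2 * (1 + t\<^sup>2)" by (simp add: add_pos_nonneg)
      ultimately have "t / 2 \<le> t / (1 + t\<^sup>2)" using t e0 by (intro divide_left_mono) auto
      then have "e / 2 \<le> \<bar>t\<bar>/(1+t\<^sup>2)" using t e0 by simp
      also have "\<dots> \<le> \<bar>t\<bar>/(1+t\<^sup>2) * \<beta> n t"
      proof -
        have "\<bar>t\<bar>/(1+t\<^sup>2) * 1 \<le> \<bar>t\<bar>/(1+t\<^sup>2) * \<beta> n t"
          using b1 by (intro mult_left_mono) (auto simp: add_pos_nonneg)
        then show ?thesis by simp
      qed
      finally show ?thesis using True by simp
    next
      case False then show ?thesis using \<beta>0[of n t] by (simp add: add_pos_nonneg)
    qed
    have "integral\<^sup>L lborel (\<lambda>t::real. e/2 * indicator {e..3*e/2} t) \<le> Mb n"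
      unfolding Mb_def
    proof (rule integral_mono)
      show "integrable lborel (\<lambda>t::real. e/2 * indicator {e..3*e/2} t)"
        using e0 by (intro integrable_mult_right integrable_real_indicator) (auto simp: emeasure_lborel_Icc)
      show "integrable lborel (\<lambda>t. \<bar>t\<bar>/(1+t\<^sup>2) * \<beta> n t)"
        using beta_int[OF \<beta>m \<beta>0 \<beta>1 \<beta>s, where g="\<lambda>_. 1" and C=1 and n=n] by simp
    qed (use lb in auto)
    moreover have "integral\<^sup>L lborel (\<lambda>t::real. e/2 * indicator {e..3*e/2} t) = e/2 * (e/2)"
      using e0 by (simp add: measure_lborel_Icc)
    moreover have "0 < e/2 * (e/2)" using e0 by simp
    ultimately show ?thesis by linarith
  qed
  have c0: "0 \<le> c n" for n using cpos Mbpos by blast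
  have \<gamma>pos: "0 < \<gamma> t" for t by (simp add: \<gamma>_def add_pos_nonneg)
  have \<gamma>anti: "\<gamma> y \<le> \<gamma> x" if "0 \<le> x" "x \<le> y" for x y
  proof -
    have "x\<^sup>2 \<le> y\<^sup>2" using that by (intro power_mono) auto
    then have "(1 + x\<^sup>2)^3 \<le> (1 + y\<^sup>2)^3" by (intro power_mono) auto
    then show ?thesis unfolding \<gamma>_def by (intro divide_left_mono) (auto intro!: mult_pos_pos add_pos_nonneg)
  qed
  have \<gamma>even: "\<gamma> (-t) = \<gamma> t" for t by (simp add: \<gamma>_def)
  have kn_dec: "kn n t = p n t + c n * \<beta> n t + 1/(real n+1) * \<gamma> t" for n t
    by (auto simp: kn_def p_def \<beta>_def Fp_def Fm_def \<gamma>even)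
  have Fp_pos: "0 < Fp n t" if "t \<ge> 0" for n t
    using RPp(2)[of n t] RBi(2)[of n t] c0[of n] \<gamma>pos[of t]
    by (simp add: Fp_def add_nonneg_pos)
  have Fm_pos: "0 < Fm n t" if "t \<ge> 0" for n t
    using RPm(2)[of n t] RBi(2)[of n t] c0[of n] \<gamma>pos[of t]
    by (simp add: Fm_def add_nonneg_pos)
  have Fp_anti: "Fp n y \<le> Fp n x" if "0 \<le> x" "x \<le> y" for n x y
  proof -
    have "Pp n y \<le> Pp n x" using RPp(1)[of n] that by (simp add: decr_def)
    moreover have "c n * Bi n y \<le> c n * Bi n x" using RBi(1)[of n] that c0[of n] by (intro mult_left_mono) (auto simp: decr_def)
    moreover have "1/(real n+1) * \<gamma> y \<le> 1/(real n+1) * \<gamma> x" using \<gamma>anti[OF that] by (intro mult_left_mono) auto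
    ultimately show ?thesis by (simp add: Fp_def)
  qed
  have Fm_anti: "Fm n y \<le> Fm n x" if "0 \<le> x" "x \<le> y" for n x y
  proof -
    have "Pm n y \<le> Pm n x" using RPm(1)[of n] that by (simp add: decr_def)
    moreover have "c n * Bi n y \<le> c n * Bi n x" using RBi(1)[of n] that c0[of n] by (intro mult_left_mono) (auto simp: decr_def)
    moreover have "1/(real n+1) * \<gamma> y \<le> 1/(real n+1) * \<gamma> x" using \<gamma>anti[OF that] by (intro mult_left_mono) auto
    ultimately show ?thesis by (simp add: Fm_def)
  qed
  have CFp: "C2B (Fp n)" for n
  proof -
    have "C2B (\<lambda>t. Pp n t + c n * Bi n t + 1/(real n+1) * \<gamma> t)"
      unfolding \<gamma>_def by (intro C2B_add C2B_cmult CPp CBi gam_C2B)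
    then show ?thesis by (simp add: Fp_def[abs_def])
  qed
  have CFm: "C2B (Fm n)" for n
  proof -
    have "C2B (\<lambda>t. Pm n t + c n * Bi n t + 1/(real n+1) * \<gamma> t)"
      unfolding \<gamma>_def by (intro C2B_add C2B_cmult CPm CBi gam_C2B)
    then show ?thesis by (simp add: Fm_def[abs_def])
  qed
  have part1: "(\<forall>t. t \<noteq> 0 \<longrightarrow> 0 \<le> kn n t) \<and> smooth_decay (kn n) \<and>
                mono_on {..<0} (kn n) \<and> antimono_on {0<..} (kn n) \<and>
                (\<forall>t. t \<noteq> 0 \<longrightarrow> 0 < kn n t)" for n
  proof (intro conjI allI impI)
    show pos: "0 < kn n t" if "t \<noteq> 0" for t
      using Fp_pos[of t n] Fm_pos[of "-t" n] by (auto simp: kn_def)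
    show "0 \<le> kn n t" if "t \<noteq> 0" for t using pos[OF that] by simp
    show "smooth_decay (kn n)" unfolding kn_def[abs_def] by (rule piecewise_smooth[OF CFp CFm])
    show "mono_on {..<0} (kn n)" unfolding monotone_on_def
    proof (intro ballI impI)
      fix x y :: real assume "x \<in> {..<0}" "y \<in> {..<0}" "x \<le> y"
      then show "kn n x \<le> kn n y" using Fm_anti[where n=n and x="-y" and y="-x"] by (auto simp: kn_def)
    qed
    show "antimono_on {0<..} (kn n)" unfolding monotone_on_def
    proof (intro ballI impI)
      fix x y :: real assume "x \<in> {0<..}" "y \<in> {0<..}" "x \<le> y"
      then show "kn n y \<le> kn n x" using Fp_anti[where n=n and x=x and y=y] by (auto simp: kn_def)
    qed
  qed
  have Ppm[measurable]: "Pp n \<in> borel_measurable borel" for n by (rule borel_measurable_continuous_onI[OF RPp(7)])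
  have Pmm[measurable]: "Pm n \<in> borel_measurable borel" for n by (rule borel_measurable_continuous_onI[OF RPm(7)])
  have pm[measurable]: "p n \<in> borel_measurable borel" for n unfolding p_def[abs_def] by measurable
  have \<gamma>m[measurable]: "\<gamma> \<in> borel_measurable borel" unfolding \<gamma>_def[abs_def] by measurable
  have p0: "0 \<le> p n t" for n t using RPp(2) RPm(2) by (simp add: p_def)
  have pk: "p n t \<le> k t" if "t \<noteq> 0" for n t
  proof (cases "t > 0")
    case True then show ?thesis using RPp(6)[of n t] gpf(5)[of t n] by (simp add: p_def)
  next
    case False then have "-t > 0" using that by auto
    then show ?thesis using RPm(6)[of n "-t"] gmf(5)[of "-t" n] False by (simp add: p_def k2_def)
  qed
  have psiw: "psi t = w t * k t" for t by (simp add: psi_def w_def)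
  have wpsi: "w t * p n t \<le> psi t" for n t
  proof (cases "t = 0")
    case True then show ?thesis by (simp add: w_def psi_def)
  next
    case False then show ?thesis using pk[OF False, of n] w0[of t] by (simp add: psiw mult_left_mono)
  qed
  have \<gamma>le: "\<gamma> t \<le> inverse (1 + t^2)" for t
  proof -
    have "1 + t\<^sup>2 \<le> (1 + t\<^sup>2)^3" by (rule self_le_power) auto
    moreover have "0 < (1 + t\<^sup>2)^3 * (1 + t\<^sup>2)" by (intro mult_pos_pos zero_less_power add_pos_nonneg) auto
    ultimately have "1 / (1 + t\<^sup>2)^3 \<le> 1 / (1 + t\<^sup>2)" by (intro divide_left_mono) auto
    then show ?thesis by (simp add: \<gamma>_def inverse_eq_divide)
  qed
  have w1: "w t \<le> 1" for t using w_le1 by (simp add: w_def)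
  have invI: "integrable lborel (\<lambda>t::real. inverse (1 + t^2))"
    using integrable_inverse_1_plus_square by (simp add: set_integrable_def)
  have i1: "integrable lborel (\<lambda>t. w t * p n t * g t)" if [measurable]: "g \<in> borel_measurable borel" and gB: "\<And>t. \<bar>g t\<bar> \<le> C" for g C n
  proof (rule Bochner_Integration.integrable_bound[OF integrable_mult_right[OF psiI, of C]])
    show "(\<lambda>t. w t * p n t * g t) \<in> borel_measurable lborel" by measurable
    show "AE x in lborel. norm (w x * p n x * g x) \<le> norm (C * psi x)"
    proof (intro AE_I2)
      fix x
      have "\<bar>w x * p n x * g x\<bar> = (w x * p n x) * \<bar>g x\<bar>" using w0[of x] p0[of n x] by (simp add: abs_mult)
      also have "\<dots> \<le> psi x * C" using wpsi[of x n] gB[of x] w0[of x] p0[of n x] psi0[of x]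
        by (intro mult_mono) auto
      also have "\<dots> \<le> norm (C * psi x)" using psi0[of x] by (simp add: abs_mult mult.commute mult_right_mono)
      finally show "norm (w x * p n x * g x) \<le> norm (C * psi x)" by simp
    qed
  qed
  have i2: "integrable lborel (\<lambda>t. w t * \<beta> n t * g t)" if [measurable]: "g \<in> borel_measurable borel" and gB: "\<And>t. \<bar>g t\<bar> \<le> C" for g C n
    using beta_int[OF \<beta>m \<beta>0 \<beta>1 \<beta>s, where g=g and C=C and n=n] that by (simp add: w_def)
  have i3: "integrable lborel (\<lambda>t. w t * \<gamma> t * g t)" if [measurable]: "g \<in> borel_measurable borel" and gB: "\<And>t. \<bar>g t\<bar> \<le> C" for g C
  proof (rule Bochner_Integration.integrable_bound[OF integrable_mult_right[OF invI, of C]])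
    show "(\<lambda>t. w t * \<gamma> t * g t) \<in> borel_measurable lborel" by measurable
    show "AE x in lborel. norm (w x * \<gamma> x * g x) \<le> norm (C * inverse (1 + x^2))"
    proof (intro AE_I2)
      fix x :: real
      have ip: "0 \<le> inverse (1 + x^2)" by (simp add: add_pos_nonneg less_imp_le)
      have "w x * \<gamma> x \<le> 1 * inverse (1 + x^2)" using w0[of x] w1[of x] \<gamma>le[of x] \<gamma>pos[of x] ip
        by (intro mult_mono) auto
      then have "\<bar>w x * \<gamma> x * g x\<bar> \<le> inverse (1 + x^2) * C" using w0[of x] \<gamma>pos[of x] gB[of x] ip
        by (simp add: abs_mult mult_mono less_imp_le)
      also have "\<dots> \<le> norm (C * inverse (1 + x^2))" using ip by (simp add: abs_mult mult.commute mult_right_mono)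
      finally show "norm (w x * \<gamma> x * g x) \<le> norm (C * inverse (1 + x^2))" by simp
    qed
  qed
  define H where "H n t = \<bar>t\<bar> * kn n t / (1 + t\<^sup>2)" for n t
  have Hdec: "H n t * g = w t * p n t * g + c n * (w t * \<beta> n t * g) + 1/(real n+1) * (w t * \<gamma> t * g)" for n t g
  proof -
    have gen: "u * (P + cc * b + 1/m * gg) / D * f = u/D * P * f + cc * (u/D * b * f) + 1/m * (u/D * gg * f)"
      for u P cc b m gg D f :: real
      unfolding divide_inverse by algebra
    show ?thesis unfolding H_def w_def kn_dec by (rule gen)
  qed
  have iH: "integrable lborel (\<lambda>t. H n t * g t)" if [measurable]: "g \<in> borel_measurable borel" and gB: "\<And>t. \<bar>g t\<bar> \<le> C" for g C n
    unfolding Hdec using i1[OF that] i2[OF that] i3[OF that] by auto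
  have Hm[measurable]: "H n \<in> borel_measurable borel" for n
    unfolding H_def[abs_def] kn_dec[abs_def] by measurable
  have H0: "0 \<le> H n t" for n t using part1[of n] by (cases "t = 0") (auto simp: H_def intro!: divide_nonneg_pos add_pos_nonneg)
  have Hint: "integral\<^sup>L lborel (\<lambda>t. H n t * g t) = integral\<^sup>L lborel (\<lambda>t. w t * p n t * g t)
        + c n * integral\<^sup>L lborel (\<lambda>t. w t * \<beta> n t * g t) + 1/(real n+1) * integral\<^sup>L lborel (\<lambda>t. w t * \<gamma> t * g t)"
    if [measurable]: "g \<in> borel_measurable borel" and gB: "\<And>t. \<bar>g t\<bar> \<le> C" for g C n
    unfolding Hdec using i1[OF that] i2[OF that] i3[OF that] by simp
  have Lm_eq: "limit_measure a k = measure_of UNIV (sets borel) (\<lambda>A. ennreal a * indicator A 0 + (\<integral>\<^sup>+t. ennreal (psi t) * indicator A t \<partial>lborel))"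
    by (simp add: limit_measure_def psi_def)
  note L = lm_facts[OF psim psi0 psiI a_nonneg, folded Lm_eq]
  have AEc: "AE t in lborel. t \<noteq> 0 \<and> isCont k t"
  proof -
    have "countable ({t. t \<noteq> 0 \<and> \<not> isCont k t} \<union> {0})" using kf(4) by simp
    then have "({t. t \<noteq> 0 \<and> \<not> isCont k t} \<union> {0}) \<in> null_sets lborel" by (rule countable_imp_null_set_lborel)
    then have "AE t in lborel. t \<notin> ({t. t \<noteq> 0 \<and> \<not> isCont k t} \<union> {0})" by (rule AE_not_in)
    then show ?thesis by (rule AE_mp) (auto intro!: AE_I2)
  qed
  have pconv: "(\<lambda>n. p n t) \<longlonglongrightarrow> k t" if "t \<noteq> 0" "isCont k t" for t
  proof (cases "t > 0")
    case True
    have "(\<lambda>n. Pp n t) \<longlonglongrightarrow> k t"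
      using R_conv[OF k_anti k_nn True that(2)] by (simp add: Pp_def hh_def gp_def[abs_def])
    then show ?thesis using True by (simp add: p_def)
  next
    case False
    then have t: "-t > 0" using that by auto
    have "isCont (\<lambda>s. k (- s)) (-t)"
      by (rule isCont_o2[where f=uminus]) (use that in auto)
    then have c2: "isCont k2 (-t)" by (simp add: k2_def[abs_def])
    have "(\<lambda>n. Pm n (-t)) \<longlonglongrightarrow> k2 (-t)"
      using R_conv[OF k2_anti k2_nn t c2] by (simp add: Pm_def hh_def gm_def[abs_def])
    then show ?thesis using False by (simp add: p_def k2_def)
  qed
  show ?thesis
  proof (rule exI[of _ kn], rule conjI)
    show "\<forall>n. (\<forall>t. t \<noteq> 0 \<longrightarrow> 0 \<le> kn n t) \<and> smooth_decay (kn n) \<and>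
                mono_on {..<0} (kn n) \<and> antimono_on {0<..} (kn n) \<and>
                (\<forall>t. t \<noteq> 0 \<longrightarrow> 0 < kn n t)" using part1 by blast
    show "weak_conv_finite (\<lambda>n. density lborel (\<lambda>t. ennreal (\<bar>t\<bar> * kn n t / (1 + t\<^sup>2)))) (limit_measure a k)"
      unfolding weak_conv_finite_def H_def[symmetric]
    proof (intro conjI allI impI)
      fix n
      show "sets (density lborel (\<lambda>t. ennreal (H n t))) = sets borel" by simp
      have "emeasure (density lborel (\<lambda>t. ennreal (H n t))) UNIV = (\<integral>\<^sup>+t. ennreal (H n t) \<partial>lborel)"
        by (simp add: emeasure_density)
      also have "\<dots> = ennreal (integral\<^sup>L lborel (H n))"
        using nn_integral_eq_integral[of lborel "H n"] iH[of "\<lambda>_. 1" 1 n] H0 by simp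
      finally show "finite_measure (density lborel (\<lambda>t. ennreal (H n t)))"
        by (intro finite_measureI) auto
    next
      show "finite_measure (limit_measure a k)" by (rule L(2))
      show "sets (limit_measure a k) = sets borel" by (rule L(1))
    next
      fix f :: "real \<Rightarrow> real"
      assume f: "continuous_on UNIV f \<and> bounded (range f)"
      have fm[measurable]: "f \<in> borel_measurable borel" using f by (intro borel_measurable_continuous_onI) auto
      obtain B where fB: "\<And>t. \<bar>f t\<bar> \<le> B" using f by (auto simp: bounded_real)
      have fc: "isCont f 0" using f by (simp add: continuous_on_eq_continuous_at)
      have eqn: "integral\<^sup>L (density lborel (\<lambda>t. ennreal (H n t))) f = integral\<^sup>L lborel (\<lambda>t. w t * p n t * f t)
        + c n * integral\<^sup>L lborel (\<lambda>t. w t * \<beta> n t * f t) + 1/(real n+1) * integral\<^sup>L lborel (\<lambda>t. w t * \<gamma> t * f t)" for n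
      proof -
        have "integral\<^sup>L (density lborel (\<lambda>t. ennreal (H n t))) f = integral\<^sup>L lborel (\<lambda>t. H n t * f t)"
          using integral_density[of f lborel "H n"] H0 by simp
        then show ?thesis using Hint[OF fm fB] by simp
      qed
      have c1: "(\<lambda>n. integral\<^sup>L lborel (\<lambda>t. w t * p n t * f t)) \<longlonglongrightarrow> integral\<^sup>L lborel (\<lambda>t. psi t * f t)"
      proof (rule integral_dominated_convergence[where w="\<lambda>t. B * psi t"])
        show "(\<lambda>t. psi t * f t) \<in> borel_measurable lborel" by measurable
        show "(\<lambda>t. w t * p n t * f t) \<in> borel_measurable lborel" for n by measurable
        show "integrable lborel (\<lambda>t. B * psi t)" by (rule integrable_mult_right[OF psiI])
        show "AE t in lborel. (\<lambda>n. w t * p n t * f t) \<longlonglongrightarrow> psi t * f t"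
          using AEc
        proof (rule AE_mp, intro AE_I2 impI)
          fix t assume "t \<noteq> 0 \<and> isCont k t"
          then have "(\<lambda>n. p n t) \<longlonglongrightarrow> k t" using pconv by blast
          then have "(\<lambda>n. w t * p n t * f t) \<longlonglongrightarrow> w t * k t * f t" by (intro tendsto_intros)
          then show "(\<lambda>n. w t * p n t * f t) \<longlonglongrightarrow> psi t * f t" by (simp add: psiw)
        qed
        show "AE t in lborel. norm (w t * p n t * f t) \<le> B * psi t" for n
        proof (intro AE_I2)
          fix t
          have "\<bar>w t * p n t * f t\<bar> = (w t * p n t) * \<bar>f t\<bar>" using w0[of t] p0[of n t] by (simp add: abs_mult)
          also have "\<dots> \<le> psi t * B" using wpsi[of t n] fB[of t] w0[of t] p0[of n t] psi0[of t]
            by (intro mult_mono) auto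
          finally show "norm (w t * p n t * f t) \<le> B * psi t" by (simp add: mult.commute)
        qed
      qed
      have c2: "(\<lambda>n. c n * integral\<^sup>L lborel (\<lambda>t. w t * \<beta> n t * f t)) \<longlonglongrightarrow> a * f 0"
        using bump_conv[OF \<beta>m \<beta>0 \<beta>1 \<beta>s _ a_nonneg fm fB fc] Mbpos
        by (simp add: c_def Mb_def w_def)
      have c3: "(\<lambda>n. 1/(real n+1) * integral\<^sup>L lborel (\<lambda>t. w t * \<gamma> t * f t)) \<longlonglongrightarrow> 0 * integral\<^sup>L lborel (\<lambda>t. w t * \<gamma> t * f t)"
      proof (intro tendsto_intros)
        have "(\<lambda>n. inverse (real (Suc n))) \<longlonglongrightarrow> 0" by (rule LIMSEQ_inverse_real_of_nat)
        then show "(\<lambda>n. 1/(real n+1)) \<longlonglongrightarrow> 0" by (simp add: inverse_eq_divide add.commute)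
      qed
      have "(\<lambda>n. integral\<^sup>L lborel (\<lambda>t. w t * p n t * f t) + c n * integral\<^sup>L lborel (\<lambda>t. w t * \<beta> n t * f t)
          + 1/(real n+1) * integral\<^sup>L lborel (\<lambda>t. w t * \<gamma> t * f t))
          \<longlonglongrightarrow> integral\<^sup>L lborel (\<lambda>t. psi t * f t) + a * f 0 + 0 * integral\<^sup>L lborel (\<lambda>t. w t * \<gamma> t * f t)"
        by (intro tendsto_add c1 c2 c3)
      moreover have "integral\<^sup>L (limit_measure a k) f = a * f 0 + integral\<^sup>L lborel (\<lambda>t. psi t * f t)"
        by (rule L(3)[OF fm fB])
      ultimately show "(\<lambda>n. integral\<^sup>L (density lborel (\<lambda>t. ennreal (H n t))) f) \<longlonglongrightarrow> integral\<^sup>L (limit_measure a k) f"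
        by (simp add: eqn add.commute)
    qed
  qed
qed


end
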